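(* Fix an integer $n\geq 2$. Let $(\Theta,\mathcal{F},\mu)$ be a probability space and $g_n:\Theta\to(0,1]$ a measurable function. Let $(\theta_i)_{i\geq 1}$ be i.i.d. with law $\mu$, set $p_{n,i}=g_n(\theta_i)$, and for each $i\geq1$, independently of everything else given $\theta_i$, sample an Erdős–Rényi graph $G(n,p_{n,i})$ on $[n]=\{1,\dots,n\}$, run a simple symmetric random walk on it started at vertex $1$, and let $\tau_i$ be its first return time to vertex $1$ (with $\tau_i=1$ if vertex $1$ is isolated). Set $\tau_0=0$ and define the state process $P_{n,t}=\theta_i$ whenever $\sum_{k=0}^{i-1}\tau_k<t\leq\sum_{k=0}^{i}\tau_k$, $i\ge1$, and the empirical occupation measure $\mu_{n,T}(A)=\frac1T\sum_{t=1}^T\mathbf{1}_{\{P_{n,t}\in A\}}$ for $A\in\mathcal{F}$, $T\geq1$. Then for every $A\in\mathcal{F}$, almost surely as $T\to\infty$, $$\mu_{n,T}(A)\longrightarrow \mu_{n,\infty}(A):=\frac{\int_A \mathbb{E}_{n,g_n(\theta)}[\tau]\,\mu(d\theta)}{\int_\Theta \mathbb{E}_{n,g_n(\theta)}[\tau]\,\mu(d\theta)}.$$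
   Context: $G(n,p)$ denotes the Erdős–Rényi random graph on vertex set $[n]$ in which each of the $\binom n2$ edges is present independently with probability $p$. Given a realization $g$, $X=(X_t)_{t\ge0}$ is the simple symmetric random walk on $g$ with $X_0=1$ (at each step it moves to a uniformly chosen neighbor of the current vertex), and $\tau=\inf\{t\geq1: X_t=1\}$, with the convention $\tau=1$ when vertex $1$ has no neighbors. $\mathbb{E}_g[\tau]$ is the expectation over the walk for fixed $g$, and $\mathbb{E}_{n,p}[\tau]:=\mathbb{E}_{n,p}[\mathbb{E}_{G(n,p)}[\tau]]$, the expectation further averaged over the random graph $G(n,p)$. *)

theory Defs
  imports "HOL-Probability.Probability"
begin

definition all_edges :: "nat \<Rightarrow> nat set set" where
  "all_edges n = {e. \<exists>u v. e = {u, v} \<and> u \<noteq> v \<and> u \<in> {1..n} \<and> v \<in> {1..n}}"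

definition er_prob :: "nat \<Rightarrow> real \<Rightarrow> nat set set \<Rightarrow> real" where
  "er_prob n p E = p ^ card E * (1 - p) ^ (card (all_edges n) - card E)"

definition nbrs :: "nat set set \<Rightarrow> nat \<Rightarrow> nat set" where
  "nbrs E v = {u. {u, v} \<in> E}"

definition deg :: "nat set set \<Rightarrow> nat \<Rightarrow> nat" where
  "deg E v = card (nbrs E v)"

definition return_walks :: "nat \<Rightarrow> nat set set \<Rightarrow> nat \<Rightarrow> nat list set" where
  "return_walks n E k = {vs. set vs \<subseteq> {1..n} \<and> length vs = k + 1 \<and> vs ! 0 = 1 \<and> vs ! k = 1
      \<and> (\<forall>j. 0 < j \<and> j < k \<longrightarrow> vs ! j \<noteq> 1)
      \<and> (\<forall>j < k. {vs ! j, vs ! Suc j} \<in> E)}"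

definition ret_prob :: "nat \<Rightarrow> nat set set \<Rightarrow> nat \<Rightarrow> real" where
  "ret_prob n E k =
     (if deg E 1 = 0 then (if k = 1 then 1 else 0)
      else if k = 0 then 0
      else (\<Sum>vs\<in>return_walks n E k. \<Prod>j<k. 1 / real (deg E (vs ! j))))"

definition exp_ret :: "nat \<Rightarrow> nat set set \<Rightarrow> real" where
  "exp_ret n E = (\<Sum>k. real k * ret_prob n E k)"

definition tau_dist :: "nat \<Rightarrow> real \<Rightarrow> nat \<Rightarrow> real" where
  "tau_dist n p k = (\<Sum>E\<in>Pow (all_edges n). er_prob n p E * ret_prob n E k)"

definition exp_tau :: "nat \<Rightarrow> real \<Rightarrow> real" where
  "exp_tau n p = (\<Sum>E\<in>Pow (all_edges n). er_prob n p E * exp_ret n E)"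

definition psum :: "(nat \<Rightarrow> nat) \<Rightarrow> nat \<Rightarrow> nat" where
  "psum tau i = (\<Sum>k\<in>{1..i}. tau k)"

definition state_proc :: "(nat \<Rightarrow> 'a) \<Rightarrow> (nat \<Rightarrow> nat) \<Rightarrow> nat \<Rightarrow> 'a" where
  "state_proc theta tau t =
     theta (THE i. 1 \<le> i \<and> psum tau (i - 1) < t \<and> t \<le> psum tau i)"

definition occupation :: "(nat \<Rightarrow> 'a) \<Rightarrow> (nat \<Rightarrow> nat) \<Rightarrow> 'a set \<Rightarrow> nat \<Rightarrow> real" where
  "occupation theta tau A T =
     real (card {t \<in> {1..T}. state_proc theta tau t \<in> A}) / real T"

end

theory Submission
  imports Defs "HOL-Library.Discrete_Functions"
begin

definition Wk :: "nat \<Rightarrow> nat set set \<Rightarrow> nat \<Rightarrow> nat \<Rightarrow> nat list set" where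
  "Wk n E v k = {vs. set vs \<subseteq> {1..n} \<and> length vs = k + 1 \<and> vs ! 0 = v \<and> vs ! k = 1
      \<and> (\<forall>j. 0 < j \<and> j < k \<longrightarrow> vs ! j \<noteq> 1)
      \<and> (\<forall>j < k. {vs ! j, vs ! Suc j} \<in> E)}"

definition wt :: "nat set set \<Rightarrow> nat list \<Rightarrow> nat \<Rightarrow> real" where
  "wt E vs k = (\<Prod>j<k. 1 / real (deg E (vs ! j)))"

fun hit :: "nat set set \<Rightarrow> nat \<Rightarrow> nat \<Rightarrow> real" where
  "hit E 0 v = (if v = 1 then 1 else 0)"
| "hit E (Suc k) v = (\<Sum>u\<in>{u\<in>nbrs E v. \<not>(u = 1 \<and> 0 < k)}. hit E k u) / real (deg E v)"

lemma finite_Wk: "finite (Wk n E v k)"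
proof -
  have "Wk n E v k \<subseteq> {vs. set vs \<subseteq> {1..n} \<and> length vs = k + 1}" by (auto simp: Wk_def)
  moreover have "finite {vs. set vs \<subseteq> {1..n} \<and> length vs = k + 1}"
    using finite_lists_length_eq[of "{1..n}" "k+1"] by simp
  ultimately show ?thesis by (rule finite_subset)
qed

lemma nbrs_sub: "E \<subseteq> all_edges n \<Longrightarrow> nbrs E v \<subseteq> {1..n}"
  unfolding nbrs_def all_edges_def by (auto simp: doubleton_eq_iff)

lemma finite_nbrs: "E \<subseteq> all_edges n \<Longrightarrow> finite (nbrs E v)"
  by (rule finite_subset[OF nbrs_sub]) auto

lemma Wk_0: "v \<in> {1..n} \<Longrightarrow> Wk n E v 0 = (if v = 1 then {[1]} else {})"
  by (auto simp: Wk_def length_Suc_conv)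

lemma Wk_Suc:
  assumes "v \<in> {1..n}" "E \<subseteq> all_edges n"
  shows "Wk n E v (Suc k) = (\<lambda>(u, vs). v # vs) ` (SIGMA u:{u\<in>nbrs E v. \<not>(u = 1 \<and> 0 < k)}. Wk n E u k)"
proof (rule set_eqI, rule iffI)
  fix xs assume xs: "xs \<in> Wk n E v (Suc k)"
  have st: "set xs \<subseteq> {1..n}" and len: "length xs = Suc k + 1" and x0: "xs ! 0 = v"
    and xk: "xs ! Suc k = 1" and av: "\<And>j. 0 < j \<Longrightarrow> j < Suc k \<Longrightarrow> xs ! j \<noteq> 1"
    and ed: "\<And>j. j < Suc k \<Longrightarrow> {xs ! j, xs ! Suc j} \<in> E"
    using xs unfolding Wk_def by auto
  obtain a vs where xs_eq: "xs = a # vs" using len by (cases xs) auto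
  have a: "a = v" using x0 xs_eq by simp
  define u where "u = vs ! 0"
  have "{xs ! 0, xs ! Suc 0} \<in> E" using ed[of 0] by simp
  then have u_n: "u \<in> nbrs E v" using xs_eq a by (simp add: nbrs_def insert_commute u_def)
  have c1: "\<not>(u = 1 \<and> 0 < k)"
  proof
    assume h: "u = 1 \<and> 0 < k"
    have "xs ! Suc 0 \<noteq> 1" using av[of "Suc 0"] h by simp
    then show False using h xs_eq by (simp add: u_def)
  qed
  have "vs \<in> Wk n E u k"
    unfolding Wk_def
  proof (intro CollectI conjI allI impI)
    show "set vs \<subseteq> {1..n}" using st xs_eq by auto
    show "length vs = k + 1" using len xs_eq by simp
    show "vs ! 0 = u" by (simp add: u_def)
    show "vs ! k = 1" using xk xs_eq by simp
    fix j
    show "0 < j \<and> j < k \<Longrightarrow> vs ! j \<noteq> 1"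
      using av[of "Suc j"] xs_eq by simp
    show "j < k \<Longrightarrow> {vs ! j, vs ! Suc j} \<in> E"
      using ed[of "Suc j"] xs_eq by simp
  qed
  then show "xs \<in> (\<lambda>(u, vs). v # vs) ` (SIGMA u:{u\<in>nbrs E v. \<not>(u = 1 \<and> 0 < k)}. Wk n E u k)"
    using u_n c1 xs_eq a by (intro image_eqI[where x="(u, vs)"]) auto
next
  fix xs assume "xs \<in> (\<lambda>(u, vs). v # vs) ` (SIGMA u:{u\<in>nbrs E v. \<not>(u = 1 \<and> 0 < k)}. Wk n E u k)"
  then obtain u vs where xs_eq: "xs = v # vs" and u: "u \<in> nbrs E v" "\<not>(u = 1 \<and> 0 < k)"
    and vs: "vs \<in> Wk n E u k" by auto
  have st: "set vs \<subseteq> {1..n}" and len: "length vs = k + 1" and x0: "vs ! 0 = u"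
    and xk: "vs ! k = 1" and av: "\<And>j. 0 < j \<Longrightarrow> j < k \<Longrightarrow> vs ! j \<noteq> 1"
    and ed: "\<And>j. j < k \<Longrightarrow> {vs ! j, vs ! Suc j} \<in> E"
    using vs unfolding Wk_def by auto
  show "xs \<in> Wk n E v (Suc k)"
    unfolding Wk_def
  proof (intro CollectI conjI allI impI)
    show "set xs \<subseteq> {1..n}" using st xs_eq assms(1) by auto
    show "length xs = Suc k + 1" using len xs_eq by simp
    show "xs ! 0 = v" using xs_eq by simp
    show "xs ! Suc k = 1" using xk xs_eq by simp
    fix j
    assume j: "0 < j \<and> j < Suc k"
    then obtain j' where j': "j = Suc j'" by (cases j) auto
    show "xs ! j \<noteq> 1"
    proof (cases j')
      case 0 then show ?thesis using j j' u x0 xs_eq by auto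
    next
      case (Suc j'') then show ?thesis using j j' av[of j'] xs_eq by auto
    qed
  next
    fix j assume j: "j < Suc k"
    show "{xs ! j, xs ! Suc j} \<in> E"
    proof (cases j)
      case 0 then show ?thesis using u x0 xs_eq by (simp add: nbrs_def insert_commute)
    next
      case (Suc j') then show ?thesis using j ed[of j'] xs_eq by simp
    qed
  qed
qed

lemma sum_Wk:
  assumes "E \<subseteq> all_edges n"
  shows "v \<in> {1..n} \<Longrightarrow> (\<Sum>vs\<in>Wk n E v k. wt E vs k) = hit E k v"
proof (induction k arbitrary: v)
  case 0
  then show ?case by (simp add: Wk_0 wt_def)
next
  case (Suc k)
  let ?U = "{u\<in>nbrs E v. \<not>(u = 1 \<and> 0 < k)}"
  have finU: "finite ?U" by (rule finite_subset[OF _ finite_nbrs[OF assms]]) auto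
  have inj: "inj_on (\<lambda>(u, vs). v # vs) (SIGMA u:?U. Wk n E u k)"
    by (auto simp: inj_on_def Wk_def)
  have "(\<Sum>vs\<in>Wk n E v (Suc k). wt E vs (Suc k))
      = (\<Sum>(u,vs)\<in>(SIGMA u:?U. Wk n E u k). wt E (v # vs) (Suc k))"
    unfolding Wk_Suc[OF Suc.prems assms] by (subst sum.reindex[OF inj]) (simp add: o_def case_prod_unfold)
  also have "\<dots> = (\<Sum>u\<in>?U. \<Sum>vs\<in>Wk n E u k. wt E (v # vs) (Suc k))"
    by (rule sum.Sigma[symmetric]) (rule finU, simp add: finite_Wk)
  also have "\<dots> = (\<Sum>u\<in>?U. \<Sum>vs\<in>Wk n E u k. wt E vs k / real (deg E v))"
    unfolding wt_def prod.lessThan_Suc_shift by simp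
  also have "\<dots> = (\<Sum>u\<in>?U. (\<Sum>vs\<in>Wk n E u k. wt E vs k)) / real (deg E v)"
    by (simp add: sum_divide_distrib)
  also have "\<dots> = (\<Sum>u\<in>?U. hit E k u) / real (deg E v)"
  proof -
    have "(\<Sum>u\<in>?U. (\<Sum>vs\<in>Wk n E u k. wt E vs k)) = (\<Sum>u\<in>?U. hit E k u)"
    proof (rule sum.cong[OF refl])
      fix u assume "u \<in> ?U"
      then have "u \<in> {1..n}" using nbrs_sub[OF assms] by blast
      then show "(\<Sum>vs\<in>Wk n E u k. wt E vs k) = hit E k u" by (rule Suc.IH)
    qed
    then show ?thesis by simp
  qed
  finally show ?case by simp
qed

lemma ret_prob_hit:
  assumes "E \<subseteq> all_edges n" "n \<ge> 1" "deg E 1 \<noteq> 0" "k \<noteq> 0"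
  shows "ret_prob n E k = hit E k 1"
  using sum_Wk[OF assms(1), of 1 k] assms
  by (simp add: ret_prob_def return_walks_def Wk_def wt_def)


fun sv :: "nat set set \<Rightarrow> nat \<Rightarrow> nat \<Rightarrow> real" where
  "sv E 0 v = 1"
| "sv E (Suc k) v = (\<Sum>u\<in>nbrs E v - {1}. sv E k u) / real (deg E v)"

lemma nbrs_sym: "u \<in> nbrs E v \<longleftrightarrow> v \<in> nbrs E u"
  by (simp add: nbrs_def insert_commute)

lemma avg_le1:
  assumes "finite T" "S \<subseteq> T" "\<And>u. u \<in> S \<Longrightarrow> f u \<le> (1::real)"
  shows "(\<Sum>u\<in>S. f u) / real (card T) \<le> 1"
proof -
  have fS: "finite S" using assms finite_subset by blast
  have "(\<Sum>u\<in>S. f u) \<le> real (card S) * 1" using assms(3) by (intro sum_bounded_above) auto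
  also have "\<dots> \<le> real (card T)" using card_mono[OF assms(1,2)] by simp
  finally have le: "(\<Sum>u\<in>S. f u) \<le> real (card T)" .
  show ?thesis
  proof (cases "card T = 0")
    case True then show ?thesis by simp
  next
    case False then show ?thesis using le by (simp add: divide_le_eq_1)
  qed
qed

context
  fixes n :: nat and E :: "nat set set"
  assumes En: "E \<subseteq> all_edges n"
begin

lemma sv_bounds: "0 \<le> sv E k v \<and> sv E k v \<le> 1"
proof (induction k arbitrary: v)
  case 0 then show ?case by simp
next
  case (Suc k)
  have "(\<Sum>u\<in>nbrs E v - {1}. sv E k u) / real (card (nbrs E v)) \<le> 1"
    using Suc.IH by (intro avg_le1 finite_nbrs[OF En]) auto
  moreover have "0 \<le> (\<Sum>u\<in>nbrs E v - {1}. sv E k u) / real (card (nbrs E v))"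
    using Suc.IH by (intro divide_nonneg_nonneg sum_nonneg) auto
  ultimately show ?case by (simp add: deg_def)
qed

lemma sv_Suc_le: "sv E (Suc k) v \<le> sv E k v"
proof (induction k arbitrary: v)
  case 0 then show ?case using sv_bounds[of "Suc 0" v] by simp
next
  case (Suc k)
  have "(\<Sum>u\<in>nbrs E v - {1}. sv E (Suc k) u) \<le> (\<Sum>u\<in>nbrs E v - {1}. sv E k u)"
    using Suc.IH by (intro sum_mono) auto
  then show ?case by (simp add: divide_right_mono)
qed

lemma sv_antimono: "k \<le> k' \<Longrightarrow> sv E k' v \<le> sv E k v"
proof (induction k' rule: dec_induct)
  case base then show ?case by simp
next
  case (step k') then show ?case using sv_Suc_le[of k' v] by linarith
qed

lemma hit_le_sv: "hit E (Suc k) v \<le> sv E k v"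
proof (induction k arbitrary: v)
  case 0
  have "(\<Sum>u\<in>{u \<in> nbrs E v. \<not> (u = 1 \<and> 0 < (0::nat))}. hit E 0 u) / real (card (nbrs E v)) \<le> 1"
    by (intro avg_le1 finite_nbrs[OF En]) auto
  then show ?case by (simp add: deg_def)
next
  case (Suc k)
  have eq: "{u \<in> nbrs E v. \<not> (u = 1 \<and> 0 < Suc k)} = nbrs E v - {1}" by auto
  have "(\<Sum>u\<in>nbrs E v - {1}. hit E (Suc k) u) \<le> (\<Sum>u\<in>nbrs E v - {1}. sv E k u)"
    using Suc.IH by (intro sum_mono) auto
  then show ?case by (simp only: hit.simps sv.simps eq) (simp add: divide_right_mono)
qed

lemma sv_closure:
  assumes u: "u \<in> nbrs E v" and v: "v = 1 \<or> sv E m v < 1"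
  shows "sv E (Suc m) u < 1"
proof -
  have vu: "v \<in> nbrs E u" using u nbrs_sym by blast
  have fin: "finite (nbrs E u)" by (rule finite_nbrs[OF En])
  have dpos: "0 < card (nbrs E u)" using vu fin card_gt_0_iff by blast
  have "(\<Sum>w\<in>nbrs E u - {1}. sv E m w) < real (card (nbrs E u))"
  proof (cases "v = 1")
    case True
    have "(\<Sum>w\<in>nbrs E u - {1}. sv E m w) \<le> real (card (nbrs E u - {1})) * 1"
      using sv_bounds by (intro sum_bounded_above) auto
    also have "card (nbrs E u - {1}) = card (nbrs E u) - 1"
      using vu True fin by simp
    finally show ?thesis using dpos by linarith
  next
    case False
    then have lt: "sv E m v < 1" using v by simp
    have vin: "v \<in> nbrs E u - {1}" using vu False by simp
    have "(\<Sum>w\<in>nbrs E u - {1}. sv E m w) = sv E m v + (\<Sum>w\<in>nbrs E u - {1} - {v}. sv E m w)"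
      using vin fin by (simp add: sum.remove)
    also have "(\<Sum>w\<in>nbrs E u - {1} - {v}. sv E m w) \<le> real (card (nbrs E u - {1} - {v})) * 1"
      using sv_bounds by (intro sum_bounded_above) auto
    also have "card (nbrs E u - {1} - {v}) \<le> card (nbrs E u) - 1"
    proof -
      have "card (nbrs E u - {1} - {v}) \<le> card (nbrs E u - {v})"
        using fin by (intro card_mono) auto
      also have "\<dots> = card (nbrs E u) - 1" using vu fin by simp
      finally show ?thesis .
    qed
    finally show ?thesis using lt dpos by linarith
  qed
  then show ?thesis using dpos by (simp add: deg_def divide_less_eq_1)
qed

definition RR :: "nat set" where "RR = {v \<in> {1..n}. \<exists>m. sv E m v < 1}"

lemma RR_closed: "u \<in> nbrs E v \<Longrightarrow> v = 1 \<or> v \<in> RR \<Longrightarrow> u \<in> RR"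
  using sv_closure[of u v] nbrs_sub[OF En] unfolding RR_def by blast

lemma uniform_m: "finite S \<Longrightarrow> \<forall>v\<in>S. \<exists>m. sv E m v < 1 \<Longrightarrow> \<exists>m>0. \<forall>v\<in>S. sv E m v < 1"
proof (induction S rule: finite_induct)
  case empty then show ?case by auto
next
  case (insert x F)
  then obtain m1 where m1: "m1 > 0" "\<forall>v\<in>F. sv E m1 v < 1" by auto
  obtain m2 where m2: "sv E m2 x < 1" using insert by auto
  let ?m = "max m1 m2"
  have "\<forall>v\<in>insert x F. sv E ?m v < 1"
  proof
    fix v assume "v \<in> insert x F"
    then show "sv E ?m v < 1"
    proof
      assume "v = x" then show ?thesis using m2 sv_antimono[of m2 ?m v] by simp
    next
      assume "v \<in> F" then show ?thesis using m1 sv_antimono[of m1 ?m v] by force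
    qed
  qed
  then show ?case using m1 by (intro exI[of _ ?m]) auto
qed

lemma RR_uniform_m: "\<exists>m>0. \<forall>v\<in>RR. sv E m v < 1"
  by (rule uniform_m) (auto simp: RR_def)

lemma finite_max_lt1:
  assumes "finite S" "\<And>v. v \<in> S \<Longrightarrow> f v < (1::real)"
  shows "\<exists>c. 0 \<le> c \<and> c < 1 \<and> (\<forall>v\<in>S. f v \<le> c)"
proof -
  let ?c = "Max (insert 0 (f ` S))"
  have "?c < 1" using assms by (subst Max_less_iff) auto
  moreover have "0 \<le> ?c" using assms by (intro Max_ge) auto
  moreover have "\<forall>v\<in>S. f v \<le> ?c" using assms by (auto intro: Max_ge)
  ultimately show ?thesis by blast
qed

lemma RR_geom:
  assumes c: "0 \<le> c" "\<forall>v\<in>RR. sv E m v \<le> c"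
  shows "v \<in> RR \<Longrightarrow> sv E (k + m) v \<le> c * sv E k v"
proof (induction k arbitrary: v)
  case 0 then show ?case using c by simp
next
  case (Suc k)
  have "(\<Sum>u\<in>nbrs E v - {1}. sv E (k + m) u) \<le> (\<Sum>u\<in>nbrs E v - {1}. c * sv E k u)"
    using Suc.IH RR_closed Suc.prems by (intro sum_mono) blast
  also have "\<dots> = c * (\<Sum>u\<in>nbrs E v - {1}. sv E k u)" by (simp add: sum_distrib_left)
  finally have "(\<Sum>u\<in>nbrs E v - {1}. sv E (k + m) u) / real (deg E v)
      \<le> c * (\<Sum>u\<in>nbrs E v - {1}. sv E k u) / real (deg E v)"
    by (simp add: divide_right_mono)
  then show ?case by simp
qed

lemma RR_pow:
  assumes c: "0 \<le> c" "\<forall>v\<in>RR. sv E m v \<le> c"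
  shows "v \<in> RR \<Longrightarrow> sv E (m * j) v \<le> c ^ j"
proof (induction j arbitrary: v)
  case 0 then show ?case by simp
next
  case (Suc j)
  have "sv E (m * Suc j) v = sv E (m * j + m) v" by (simp add: algebra_simps)
  also have "\<dots> \<le> c * sv E (m * j) v" by (rule RR_geom[OF c Suc.prems])
  also have "\<dots> \<le> c * c ^ j" using Suc.IH[OF Suc.prems] c(1) by (intro mult_left_mono) auto
  finally show ?case by simp
qed

lemma RR_bound:
  assumes c: "0 \<le> c" "\<forall>v\<in>RR. sv E m v \<le> c" and v: "v \<in> RR"
  shows "sv E k v \<le> c ^ (k div m)"
proof -
  have "sv E k v \<le> sv E (m * (k div m)) v"
    by (rule sv_antimono) (simp add: mult.commute)
  also have "\<dots> \<le> c ^ (k div m)" by (rule RR_pow[OF c v])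
  finally show ?thesis .
qed

lemma ret_SS_bound:
  assumes n1: "n \<ge> 1" and d: "deg E 1 \<noteq> 0"
  shows "\<exists>c m. 0 \<le> c \<and> c < 1 \<and> m > 0 \<and> (\<forall>k. ret_prob n E (Suc (Suc k)) \<le> c ^ (k div m))"
proof -
  obtain m where m: "m > 0" "\<forall>v\<in>RR. sv E m v < 1" using RR_uniform_m by blast
  obtain c where c: "0 \<le> c" "c < 1" "\<forall>v\<in>RR. sv E m v \<le> c"
    using finite_max_lt1[of RR "\<lambda>v. sv E m v"] m unfolding RR_def by auto
  have "ret_prob n E (Suc (Suc k)) \<le> c ^ (k div m)" for k
  proof -
    let ?U = "{u \<in> nbrs E 1. \<not> (u = 1 \<and> 0 < Suc k)}"
    have fU: "finite ?U" using finite_nbrs[OF En] by (rule finite_subset[rotated]) auto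
    have "(\<Sum>u\<in>?U. hit E (Suc k) u) \<le> real (card ?U) * c ^ (k div m)"
    proof (rule sum_bounded_above)
      fix u assume "u \<in> ?U"
      then have "u \<in> RR" using RR_closed[of u 1] by auto
      then show "hit E (Suc k) u \<le> c ^ (k div m)"
        using hit_le_sv[of k u] RR_bound[OF c(1) c(3)] by (meson order_trans)
    qed
    also have "\<dots> \<le> real (deg E 1) * c ^ (k div m)"
      unfolding deg_def using c(1) card_mono[OF finite_nbrs[OF En], of ?U]
      by (intro mult_right_mono) auto
    finally have "(\<Sum>u\<in>?U. hit E (Suc k) u) / real (deg E 1) \<le> c ^ (k div m)"
      using d by (simp add: divide_le_eq mult.commute)
    then show ?thesis using ret_prob_hit[OF En n1 d, of "Suc (Suc k)"] by simp
  qed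
  then show ?thesis using c m by blast
qed

end

lemma ret_prob_nonneg: "0 \<le> ret_prob n E k"
  by (auto simp: ret_prob_def intro!: sum_nonneg prod_nonneg)


lemma geom_conv:
  fixes c :: real
  assumes c: "0 \<le> c" "c < 1" and m: "m > 0"
  shows "\<exists>\<rho> C. 0 < \<rho> \<and> \<rho> < 1 \<and> 0 \<le> C \<and> (\<forall>k. c ^ (k div m) \<le> C * \<rho> ^ k)"
proof -
  define \<rho> where "\<rho> = max (1/2) (root m c)"
  have r0: "0 < \<rho>" "\<rho> < 1" using c m by (auto simp: \<rho>_def)
  have cr: "c \<le> \<rho> ^ m"
  proof -
    have "c = root m c ^ m" using c m by simp
    also have "\<dots> \<le> \<rho> ^ m" using c by (intro power_mono) (auto simp: \<rho>_def real_root_ge_zero)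
    finally show ?thesis .
  qed
  have "c ^ (k div m) \<le> (1 / \<rho> ^ m) * \<rho> ^ k" for k
  proof -
    have "c ^ (k div m) \<le> (\<rho> ^ m) ^ (k div m)" using c cr by (intro power_mono) auto
    also have "\<dots> = \<rho> ^ (m * (k div m))" by (simp add: power_mult)
    also have "\<dots> = \<rho> ^ (m * (k div m) + m) / \<rho> ^ m" using r0 by (simp add: power_add)
    also have "\<rho> ^ (m * (k div m) + m) \<le> \<rho> ^ k"
    proof (rule power_decreasing)
      show "k \<le> m * (k div m) + m"
      proof -
      have "k mod m < m" using m by simp
      moreover have "m * (k div m) + k mod m = k" by (rule mult_div_mod_eq)
      ultimately show ?thesis by linarith
    qed
    qed (use r0 in auto)
    finally show ?thesis using r0 by (simp add: divide_right_mono)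
  qed
  then show ?thesis using r0 by (intro exI[of _ \<rho>] exI[of _ "1 / \<rho> ^ m"]) auto
qed

lemma ret_tail:
  assumes En: "E \<subseteq> all_edges n" and n1: "n \<ge> 1"
  shows "\<exists>C \<rho>. 0 < \<rho> \<and> \<rho> < 1 \<and> 0 \<le> C \<and> (\<forall>k. ret_prob n E k \<le> C * \<rho> ^ k)"
proof (cases "deg E 1 = 0")
  case True
  have "ret_prob n E k \<le> 2 * (1/2) ^ k" for k
    using True by (cases k) (auto simp: ret_prob_def)
  then show ?thesis by (intro exI[of _ 2] exI[of _ "1/2"]) auto
next
  case False
  obtain c m where cm: "0 \<le> c" "c < 1" "m > 0" "\<forall>k. ret_prob n E (Suc (Suc k)) \<le> c ^ (k div m)"
    using ret_SS_bound[OF En n1 False] by blast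
  obtain \<rho> C where rc: "0 < \<rho>" "\<rho> < 1" "0 \<le> C" "\<forall>k. c ^ (k div m) \<le> C * \<rho> ^ k"
    using geom_conv[OF cm(1,2,3)] by blast
  define C' where "C' = max C 1 / \<rho> ^ 2"
  have "ret_prob n E k \<le> C' * \<rho> ^ k" for k
  proof (cases k)
    case 0 then show ?thesis using rc by (simp add: ret_prob_def C'_def)
  next
    case (Suc k1)
    show ?thesis
    proof (cases k1)
      case 0
      have "ret_prob n E 1 = hit E 1 1" using ret_prob_hit[OF En n1 False] by simp
      also have "\<dots> \<le> 1" using hit_le_sv[OF En, of 0 1] by simp
      also have "1 \<le> max C 1 / \<rho>"
        using rc by (simp add: le_divide_eq)
      finally show ?thesis using Suc 0 rc by (simp add: C'_def power2_eq_square)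
    next
      case (Suc k2)
      have "ret_prob n E k \<le> C * \<rho> ^ k2"
        using order_trans[OF cm(4)[rule_format, of k2] rc(4)[rule_format, of k2]] \<open>k = Suc k1\<close> Suc
        by simp
      also have "\<dots> \<le> max C 1 * \<rho> ^ k2" using rc by (intro mult_right_mono) auto
      also have "\<dots> = C' * \<rho> ^ k" using rc \<open>k = Suc k1\<close> Suc by (simp add: C'_def power2_eq_square)
      finally show ?thesis .
    qed
  qed
  then show ?thesis using rc by (intro exI[of _ C'] exI[of _ \<rho>]) (auto simp: C'_def)
qed

lemma uniform_tail:
  fixes f :: "'e \<Rightarrow> nat \<Rightarrow> real"
  shows "finite S \<Longrightarrow> (\<forall>x\<in>S. \<exists>C \<rho>. 0 < \<rho> \<and> \<rho> < 1 \<and> 0 \<le> C \<and> (\<forall>k. f x k \<le> C * \<rho> ^ k))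
    \<Longrightarrow> \<exists>C \<rho>. 0 < \<rho> \<and> \<rho> < 1 \<and> 0 \<le> C \<and> (\<forall>x\<in>S. \<forall>k. f x k \<le> C * \<rho> ^ k)"
proof (induction S rule: finite_induct)
  case empty then show ?case by (intro exI[of _ 0] exI[of _ "1/2"]) auto
next
  case (insert y F)
  then obtain C1 r1 where 1: "0 < r1" "r1 < 1" "0 \<le> C1" "\<forall>x\<in>F. \<forall>k. f x k \<le> C1 * r1 ^ k" by auto
  obtain C2 r2 where 2: "0 < r2" "r2 < 1" "0 \<le> C2" "\<forall>k. f y k \<le> C2 * r2 ^ k" using insert by auto
  have "\<forall>x\<in>insert y F. \<forall>k. f x k \<le> max C1 C2 * max r1 r2 ^ k"
  proof (intro ballI allI)
    fix x k assume "x \<in> insert y F"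
    then show "f x k \<le> max C1 C2 * max r1 r2 ^ k"
    proof
      assume "x = y"
      have h: "C2 * r2 ^ k \<le> max C1 C2 * max r1 r2 ^ k"
        using 1 2 by (intro mult_mono power_mono) auto
      show ?thesis using order_trans[OF 2(4)[rule_format, of k] h] \<open>x = y\<close> by simp
    next
      assume "x \<in> F"
      have h: "C1 * r1 ^ k \<le> max C1 C2 * max r1 r2 ^ k"
        using 1 2 by (intro mult_mono power_mono) auto
      show ?thesis using order_trans[OF 1(4)[rule_format, of x k] h] \<open>x \<in> F\<close> by simp
    qed
  qed
  then show ?case using 1 2 by (intro exI[of _ "max C1 C2"] exI[of _ "max r1 r2"]) auto
qed

lemma finite_all_edges: "finite (all_edges n)"
proof -
  have "all_edges n \<subseteq> Pow {1..n}" unfolding all_edges_def by auto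
  then show ?thesis by (rule finite_subset) auto
qed

lemma er_prob_nonneg: "0 \<le> p \<Longrightarrow> p \<le> 1 \<Longrightarrow> 0 \<le> er_prob n p E"
  by (simp add: er_prob_def)

lemma er_prob_le1: "0 \<le> p \<Longrightarrow> p \<le> 1 \<Longrightarrow> er_prob n p E \<le> 1"
  unfolding er_prob_def by (intro mult_le_one power_le_one) auto

lemma tau_dist_nonneg: "0 \<le> p \<Longrightarrow> p \<le> 1 \<Longrightarrow> 0 \<le> tau_dist n p k"
  unfolding tau_dist_def by (intro sum_nonneg mult_nonneg_nonneg er_prob_nonneg ret_prob_nonneg)

lemma tau_tail:
  assumes n1: "n \<ge> 1"
  shows "\<exists>K \<rho>. 0 < \<rho> \<and> \<rho> < 1 \<and> 0 \<le> K \<and>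
     (\<forall>E\<in>Pow (all_edges n). \<forall>k. ret_prob n E k \<le> K * \<rho> ^ k) \<and>
     (\<forall>p k. 0 \<le> p \<longrightarrow> p \<le> 1 \<longrightarrow> tau_dist n p k \<le> K * \<rho> ^ k)"
proof -
  have fin: "finite (Pow (all_edges n))" using finite_all_edges by simp
  have "\<forall>E\<in>Pow (all_edges n). \<exists>C \<rho>. 0 < \<rho> \<and> \<rho> < 1 \<and> 0 \<le> C \<and> (\<forall>k. ret_prob n E k \<le> C * \<rho> ^ k)"
    using ret_tail[OF _ n1] by blast
  from uniform_tail[OF fin this]
  obtain C \<rho> where C: "0 < \<rho>" "\<rho> < 1" "0 \<le> C" "\<forall>E\<in>Pow (all_edges n). \<forall>k. ret_prob n E k \<le> C * \<rho> ^ k"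
    by blast
  define K where "K = real (card (Pow (all_edges n))) * C"
  have K0: "0 \<le> K" using C by (simp add: K_def)
  have KC: "C \<le> K"
  proof -
    have "1 \<le> card (Pow (all_edges n))" using finite_all_edges by (simp add: card_Pow)
    then show ?thesis using C by (simp add: K_def mult_le_cancel_right1)
  qed
  have "tau_dist n p k \<le> K * \<rho> ^ k" if p: "0 \<le> p" "p \<le> 1" for p k
  proof -
    have "tau_dist n p k \<le> (\<Sum>E\<in>Pow (all_edges n). C * \<rho> ^ k)"
      unfolding tau_dist_def
    proof (rule sum_mono)
      fix E assume E: "E \<in> Pow (all_edges n)"
      have "er_prob n p E * ret_prob n E k \<le> 1 * ret_prob n E k"
        using p by (intro mult_right_mono er_prob_le1 ret_prob_nonneg)
      also have "\<dots> \<le> C * \<rho> ^ k" using C E by auto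
      finally show "er_prob n p E * ret_prob n E k \<le> C * \<rho> ^ k" .
    qed
    also have "\<dots> = K * \<rho> ^ k" by (simp add: K_def)
    finally show ?thesis .
  qed
  moreover have "\<forall>E\<in>Pow (all_edges n). \<forall>k. ret_prob n E k \<le> K * \<rho> ^ k"
  proof (intro ballI allI)
    fix E k assume "E \<in> Pow (all_edges n)"
    then have "ret_prob n E k \<le> C * \<rho> ^ k" using C by blast
    also have "\<dots> \<le> K * \<rho> ^ k" using KC C by (intro mult_right_mono) auto
    finally show "ret_prob n E k \<le> K * \<rho> ^ k" .
  qed
  ultimately show ?thesis using C K0 by blast
qed

lemma summable_sq_geom:
  assumes r: "0 \<le> \<rho>" "\<rho> < 1"
  shows "summable (\<lambda>k. real k ^ 2 * \<rho> ^ k)"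
proof -
  define t where "t = root 3 \<rho>"
  have t: "0 \<le> t" "t < 1" "t ^ 3 = \<rho>" using r by (auto simp: t_def real_root_ge_zero)
  have "(\<lambda>k. of_nat k * t ^ k) \<longlonglongrightarrow> 0" using t by (intro powser_times_n_limit_0) auto
  then have "Bseq (\<lambda>k. of_nat k * t ^ k)" by (rule convergent_imp_Bseq[OF convergentI])
  then obtain B where B: "B > 0" "\<And>k. norm (real k * t ^ k) \<le> B" by (auto simp: Bseq_def)
  have "norm (real k ^ 2 * \<rho> ^ k) \<le> B ^ 2 * t ^ k" for k
  proof -
    have rt: "\<rho> = t * t * t" using t(3) by (simp add: power3_eq_cube)
    have "real k ^ 2 * \<rho> ^ k = real k ^ 2 * (t ^ k * t ^ k * t ^ k)"
      by (simp add: rt power_mult_distrib)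
    also have "\<dots> = (real k * t ^ k) ^ 2 * t ^ k" by (simp add: power2_eq_square mult_ac)
    finally have "real k ^ 2 * \<rho> ^ k = (real k * t ^ k) ^ 2 * t ^ k" .
    also have "\<dots> \<le> B ^ 2 * t ^ k"
    proof (rule mult_right_mono)
      have "\<bar>real k * t ^ k\<bar> \<le> B" using B(2)[of k] by simp
      then have "\<bar>real k * t ^ k\<bar> ^ 2 \<le> B ^ 2" by (rule power_mono) simp
      then show "(real k * t ^ k) ^ 2 \<le> B ^ 2" by simp
    qed (use t in auto)
    finally show ?thesis using r by simp
  qed
  moreover have sg: "summable (\<lambda>k. B ^ 2 * t ^ k)" using t by (intro summable_mult summable_geometric) auto
  ultimately show ?thesis by (intro summable_comparison_test'[OF sg, where N=0])
qed

lemma summable_k_geom: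
  assumes r: "0 \<le> \<rho>" "\<rho> < 1"
  shows "summable (\<lambda>k. real k * \<rho> ^ k)"
proof (rule summable_comparison_test'[OF summable_sq_geom[OF r], where N=0])
  fix k :: nat
  have "real k \<le> real k ^ 2" by (cases k) (auto simp: power2_eq_square)
  then show "norm (real k * \<rho> ^ k) \<le> real k ^ 2 * \<rho> ^ k" using r by (simp add: mult_right_mono)
qed

lemma summable_tau_moment:
  assumes n1: "n \<ge> 1" and p: "0 \<le> p" "p \<le> 1" and f: "\<And>k. 0 \<le> f k" "\<And>k. f k \<le> real k ^ 2"
  shows "summable (\<lambda>k. f k * tau_dist n p k)"
proof -
  obtain K \<rho> where K: "0 < \<rho>" "\<rho> < 1" "0 \<le> K" "\<forall>p k. 0 \<le> p \<longrightarrow> p \<le> 1 \<longrightarrow> tau_dist n p k \<le> K * \<rho> ^ k"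
    using tau_tail[OF n1] by blast
  have b: "norm (f k * tau_dist n p k) \<le> K * (real k ^ 2 * \<rho> ^ k)" for k
  proof -
    have t0: "0 \<le> tau_dist n p k" by (rule tau_dist_nonneg[OF p])
    have t1: "tau_dist n p k \<le> K * \<rho> ^ k" using K(4) p by blast
    have f0: "0 \<le> f k" by (rule f(1))
    have "f k * tau_dist n p k \<le> real k ^ 2 * (K * \<rho> ^ k)"
      by (rule mult_mono[OF f(2) t1]) (use t0 in simp_all)
    moreover have "norm (f k * tau_dist n p k) = f k * tau_dist n p k"
      using f0 t0 by simp
    ultimately show ?thesis by (simp add: mult.left_commute)
  qed
  have sg: "summable (\<lambda>k. K * (real k ^ 2 * \<rho> ^ k))"
    using K by (intro summable_mult summable_sq_geom) auto
  show ?thesis by (rule summable_comparison_test'[OF sg b])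
qed

lemma tau_moment_bound:
  assumes n1: "n \<ge> 1"
  shows "\<exists>V. \<forall>p. 0 \<le> p \<longrightarrow> p \<le> 1 \<longrightarrow> (\<Sum>k. real k ^ 2 * tau_dist n p k) \<le> V"
proof -
  obtain K \<rho> where K: "0 < \<rho>" "\<rho> < 1" "0 \<le> K" "\<forall>p k. 0 \<le> p \<longrightarrow> p \<le> 1 \<longrightarrow> tau_dist n p k \<le> K * \<rho> ^ k"
    using tau_tail[OF n1] by blast
  have "(\<Sum>k. real k ^ 2 * tau_dist n p k) \<le> (\<Sum>k. K * (real k ^ 2 * \<rho> ^ k))" if p: "0 \<le> p" "p \<le> 1" for p
  proof (rule suminf_le)
    show "summable (\<lambda>k. real k ^ 2 * tau_dist n p k)"
      by (rule summable_tau_moment[OF n1 p]) auto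
    show "summable (\<lambda>k. K * (real k ^ 2 * \<rho> ^ k))"
      using K by (intro summable_mult summable_sq_geom) auto
    fix k
    have "tau_dist n p k \<le> K * \<rho> ^ k" using K p by auto
    from mult_left_mono[OF this, of "real k ^ 2"]
    show "real k ^ 2 * tau_dist n p k \<le> K * (real k ^ 2 * \<rho> ^ k)"
      by (simp add: algebra_simps)
  qed
  then show ?thesis by blast
qed

lemma exp_tau_series:
  assumes n1: "n \<ge> 1" and p: "0 \<le> p" "p \<le> 1"
  shows "exp_tau n p = (\<Sum>k. real k * tau_dist n p k)"
proof -
  obtain K \<rho> where K: "0 < \<rho>" "\<rho> < 1" "0 \<le> K" "\<forall>E\<in>Pow (all_edges n). \<forall>k. ret_prob n E k \<le> K * \<rho> ^ k"
    using tau_tail[OF n1] by blast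
  have sk: "summable (\<lambda>k. real k * ret_prob n E k)" if E: "E \<in> Pow (all_edges n)" for E
  proof (rule summable_comparison_test'[where N=0 and g="\<lambda>k. K * (real k * \<rho> ^ k)"])
    show "summable (\<lambda>k. K * (real k * \<rho> ^ k))" using K by (intro summable_mult summable_k_geom) auto
    fix k
    have "ret_prob n E k \<le> K * \<rho> ^ k" using K E by blast
    then have "real k * ret_prob n E k \<le> real k * (K * \<rho> ^ k)" by (rule mult_left_mono) simp
    moreover have "0 \<le> real k * ret_prob n E k" using ret_prob_nonneg[of n E k] by simp
    ultimately show "norm (real k * ret_prob n E k) \<le> K * (real k * \<rho> ^ k)"
      by (simp add: mult.left_commute)
  qed
  have sE: "summable (\<lambda>k. er_prob n p E * (real k * ret_prob n E k))" if E: "E \<in> Pow (all_edges n)" for E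
    using sk[OF E] by (rule summable_mult)
  have "exp_tau n p = (\<Sum>E\<in>Pow (all_edges n). \<Sum>k. er_prob n p E * (real k * ret_prob n E k))"
    unfolding exp_tau_def exp_ret_def
  proof (rule sum.cong[OF refl])
    fix E assume E: "E \<in> Pow (all_edges n)"
    show "er_prob n p E * (\<Sum>k. real k * ret_prob n E k) = (\<Sum>k. er_prob n p E * (real k * ret_prob n E k))"
      using sk[OF E] by (rule suminf_mult[symmetric])
  qed
  also have "\<dots> = (\<Sum>k. \<Sum>E\<in>Pow (all_edges n). er_prob n p E * (real k * ret_prob n E k))"
    using sE by (rule suminf_sum[symmetric])
  also have "\<dots> = (\<Sum>k. real k * tau_dist n p k)"
    unfolding tau_dist_def by (simp add: sum_distrib_left mult.left_commute)
  finally show ?thesis .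
qed


lemma interp_limit:
  fixes S :: "nat \<Rightarrow> real"
  assumes mono: "\<And>a b. a \<le> b \<Longrightarrow> S a \<le> S b" and nn: "\<And>a. 0 \<le> S a"
    and lim: "(\<lambda>k. S (k^2) / real (k^2)) \<longlonglongrightarrow> m"
  shows "(\<lambda>N. S N / real N) \<longlonglongrightarrow> m"
proof -
  define L where "L k = S (k^2) / real ((Suc k)^2)" for k
  define U where "U k = S ((Suc k)^2) / real (k^2)" for k
  have r1: "(\<lambda>k. (real k / real (Suc k)) ^ 2) \<longlonglongrightarrow> 1 ^ 2"
    by (intro tendsto_power LIMSEQ_n_over_Suc_n)
  have r2: "(\<lambda>k. (real (Suc k) / real k) ^ 2) \<longlonglongrightarrow> 1 ^ 2"
    by (intro tendsto_power LIMSEQ_Suc_n_over_n)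
  have limS: "(\<lambda>k. S ((Suc k)^2) / real ((Suc k)^2)) \<longlonglongrightarrow> m"
    using LIMSEQ_Suc[OF lim] by simp
  have "(\<lambda>k. S (k^2) / real (k^2) * (real k / real (Suc k)) ^ 2) \<longlonglongrightarrow> m * 1 ^ 2"
    by (intro tendsto_mult lim r1)
  moreover have "\<forall>\<^sub>F k in sequentially. S (k^2) / real (k^2) * (real k / real (Suc k)) ^ 2 = L k"
    using eventually_gt_at_top[of "0::nat"]
    by eventually_elim (simp add: L_def power_divide field_simps del: of_nat_Suc)
  ultimately have limL: "L \<longlonglongrightarrow> m" by (simp add: tendsto_cong)
  have "(\<lambda>k. S ((Suc k)^2) / real ((Suc k)^2) * (real (Suc k) / real k) ^ 2) \<longlonglongrightarrow> m * 1 ^ 2"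
    by (intro tendsto_mult limS r2)
  moreover have "\<forall>\<^sub>F k in sequentially. S ((Suc k)^2) / real ((Suc k)^2) * (real (Suc k) / real k) ^ 2 = U k"
    using eventually_gt_at_top[of "0::nat"]
    by eventually_elim (simp add: U_def power_divide field_simps del: of_nat_Suc)
  ultimately have limU: "U \<longlonglongrightarrow> m" by (simp add: tendsto_cong)
  have fs: "filterlim floor_sqrt at_top sequentially"
  proof (subst filterlim_at_top, intro allI)
    fix Z :: nat
    show "\<forall>\<^sub>F x in sequentially. Z \<le> floor_sqrt x"
      using eventually_ge_at_top[of "Z^2"] by eventually_elim (rule le_floor_sqrtI)
  qed
  have lo: "\<forall>\<^sub>F N in sequentially. L (floor_sqrt N) \<le> S N / real N"
    using eventually_gt_at_top[of "0::nat"]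
  proof eventually_elim
    case (elim N)
    let ?k = "floor_sqrt N"
    have k1: "?k^2 \<le> N" by simp
    have k2: "N < (Suc ?k)^2" by (rule Suc_floor_sqrt_power2_gt)
    have "L ?k = S (?k^2) / real ((Suc ?k)^2)" by (simp add: L_def)
    also have "\<dots> \<le> S N / real ((Suc ?k)^2)"
      using mono[OF k1] by (intro divide_right_mono) auto
    also have "\<dots> \<le> S N / real N"
    proof (rule divide_left_mono)
      show "real N \<le> real ((Suc ?k)^2)" using k2 by (metis less_imp_le of_nat_le_iff)
      show "0 \<le> S N" by (rule nn)
      show "0 < real ((Suc ?k)^2) * real N" using elim by simp
    qed
    finally show ?case .
  qed
  have hi: "\<forall>\<^sub>F N in sequentially. S N / real N \<le> U (floor_sqrt N)"
    using eventually_gt_at_top[of "0::nat"]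
  proof eventually_elim
    case (elim N)
    let ?k = "floor_sqrt N"
    have k1: "?k^2 \<le> N" by simp
    have k2: "N < (Suc ?k)^2" by (rule Suc_floor_sqrt_power2_gt)
    have kpos: "0 < ?k" using elim by simp
    have "S N / real N \<le> S ((Suc ?k)^2) / real N"
      using mono[of N "(Suc ?k)^2"] k2 by (intro divide_right_mono) auto
    also have "\<dots> \<le> S ((Suc ?k)^2) / real (?k^2)"
      using k1 kpos nn[of "(Suc ?k)^2"] by (intro divide_left_mono) auto
    also have "\<dots> = U ?k" by (simp add: U_def)
    finally show ?case .
  qed
  show ?thesis
    by (rule tendsto_sandwich[OF lo hi filterlim_compose[OF limL fs] filterlim_compose[OF limU fs]])
qed


context prob_space begin

lemma slln_sq:
  fixes W :: "nat \<Rightarrow> 'a \<Rightarrow> real" and m V :: real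
  assumes indep: "indep_vars (\<lambda>_. borel) W {1..}"
    and int2: "\<And>i. 1 \<le> i \<Longrightarrow> integrable M (\<lambda>\<omega>. (W i \<omega>)^2)"
    and mean: "\<And>i. 1 \<le> i \<Longrightarrow> expectation (W i) = m"
    and var: "\<And>i. 1 \<le> i \<Longrightarrow> expectation (\<lambda>\<omega>. (W i \<omega>)^2) \<le> V"
    and nonneg: "\<And>i \<omega>. 1 \<le> i \<Longrightarrow> \<omega> \<in> space M \<Longrightarrow> 0 \<le> W i \<omega>"
  shows "AE \<omega> in M. (\<lambda>N. (\<Sum>i=1..N. W i \<omega>) / real N) \<longlonglongrightarrow> m"
proof -
  have meas: "W i \<in> borel_measurable M" if "1 \<le> i" for i
    using indep that unfolding indep_vars_def by auto
  have intW: "integrable M (W i)" if "1 \<le> i" for i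
    using square_integrable_imp_integrable[OF meas[OF that] int2[OF that]] .
  define D where "D i \<omega> = W i \<omega> - m" for i \<omega>
  have intD: "integrable M (D i)" if "1 \<le> i" for i
    unfolding D_def using intW[OF that] by (intro Bochner_Integration.integrable_diff) auto
  have ED: "expectation (D i) = 0" if "1 \<le> i" for i
  proof -
    have "expectation (\<lambda>\<omega>. W i \<omega> - m) = expectation (W i) - expectation (\<lambda>\<omega>. m)"
      by (rule Bochner_Integration.integral_diff[OF intW[OF that] integrable_const])
    then show ?thesis using mean[OF that] by (simp add: D_def[abs_def] prob_space)
  qed
  have measD: "D i \<in> borel_measurable M" if "1 \<le> i" for i
    unfolding D_def using meas[OF that] by measurable
  have indD: "indep_vars (\<lambda>_. borel) D {1..}"
    unfolding D_def[abs_def]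
    by (rule indep_vars_compose2[OF indep, where Y="\<lambda>i x. x - m"]) measurable
  have cross: "integrable M (\<lambda>\<omega>. D i \<omega> * D j \<omega>) \<and> expectation (\<lambda>\<omega>. D i \<omega> * D j \<omega>) = 0"
    if ij: "1 \<le> i" "1 \<le> j" "i \<noteq> j" for i j
  proof -
    have ind2: "indep_vars (\<lambda>_. borel) D {i, j}" by (rule indep_vars_subset[OF indD]) (use ij in auto)
    have fin: "finite {i, j}" by simp
    have ints: "\<And>k. k \<in> {i, j} \<Longrightarrow> integrable M (D k)" using intD ij by auto
    have "integrable M (\<lambda>\<omega>. \<Prod>k\<in>{i, j}. D k \<omega>)" by (rule indep_vars_integrable[OF fin ind2 ints])
    moreover have "(\<integral>\<omega>. (\<Prod>k\<in>{i, j}. D k \<omega>) \<partial>M) = (\<Prod>k\<in>{i, j}. expectation (D k))"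
      by (rule indep_vars_lebesgue_integral[OF fin ind2 ints])
    ultimately show ?thesis using ij ED by simp
  qed
  have diag: "integrable M (\<lambda>\<omega>. D i \<omega> * D i \<omega>) \<and> expectation (\<lambda>\<omega>. D i \<omega> * D i \<omega>) \<le> V"
    if i: "1 \<le> i" for i
  proof -
    have eq: "(\<lambda>\<omega>. D i \<omega> * D i \<omega>) = (\<lambda>\<omega>. (W i \<omega>)^2 - 2 * m * W i \<omega> + m^2)"
      by (auto simp: D_def power2_eq_square algebra_simps)
    have i1: "integrable M (\<lambda>\<omega>. (W i \<omega>)^2 - 2 * m * W i \<omega>)"
      using int2[OF i] intW[OF i] by auto
    have i2: "integrable M (\<lambda>\<omega>. (W i \<omega>)^2 - 2 * m * W i \<omega> + m^2)"
      using i1 by auto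
    have "expectation (\<lambda>\<omega>. (W i \<omega>)^2 - 2 * m * W i \<omega> + m^2)
        = expectation (\<lambda>\<omega>. (W i \<omega>)^2) - 2 * m * expectation (W i) + m^2"
      using int2[OF i] intW[OF i] i1 by (simp add: integral_add integral_diff prob_space)
    also have "\<dots> = expectation (\<lambda>\<omega>. (W i \<omega>)^2) - m^2" using mean[OF i] by (simp add: power2_eq_square)
    also have "\<dots> \<le> V" using var[OF i] zero_le_power2[of m] by linarith
    finally show ?thesis using i2 eq by simp
  qed
  have sumsq: "integrable M (\<lambda>\<omega>. (\<Sum>i=1..N. D i \<omega>)^2) \<and> expectation (\<lambda>\<omega>. (\<Sum>i=1..N. D i \<omega>)^2) \<le> real N * V"
    for N
  proof -
    have eq: "(\<lambda>\<omega>. (\<Sum>i=1..N. D i \<omega>)^2) = (\<lambda>\<omega>. \<Sum>i=1..N. \<Sum>j=1..N. D i \<omega> * D j \<omega>)"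
      by (simp add: power2_eq_square sum_product)
    have pint: "integrable M (\<lambda>\<omega>. D i \<omega> * D j \<omega>)" if "i \<in> {1..N}" "j \<in> {1..N}" for i j
      using cross[of i j] diag[of i] that by (cases "i = j") auto
    have int: "integrable M (\<lambda>\<omega>. \<Sum>i=1..N. \<Sum>j=1..N. D i \<omega> * D j \<omega>)"
      using pint by (intro Bochner_Integration.integrable_sum) auto
    have inner: "(\<Sum>j=1..N. expectation (\<lambda>\<omega>. D i \<omega> * D j \<omega>)) = expectation (\<lambda>\<omega>. D i \<omega> * D i \<omega>)"
      if i: "i \<in> {1..N}" for i
    proof -
      have "(\<Sum>j=1..N. expectation (\<lambda>\<omega>. D i \<omega> * D j \<omega>))
          = expectation (\<lambda>\<omega>. D i \<omega> * D i \<omega>) + (\<Sum>j\<in>{1..N} - {i}. expectation (\<lambda>\<omega>. D i \<omega> * D j \<omega>))"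
        using i by (simp add: sum.remove)
      also have "(\<Sum>j\<in>{1..N} - {i}. expectation (\<lambda>\<omega>. D i \<omega> * D j \<omega>)) = 0"
        using cross i by (intro sum.neutral) auto
      finally show ?thesis by simp
    qed
    have "expectation (\<lambda>\<omega>. \<Sum>i=1..N. \<Sum>j=1..N. D i \<omega> * D j \<omega>)
        = (\<Sum>i=1..N. \<Sum>j=1..N. expectation (\<lambda>\<omega>. D i \<omega> * D j \<omega>))"
    proof -
      have intI: "integrable M (\<lambda>\<omega>. \<Sum>j=1..N. D i \<omega> * D j \<omega>)" if "i \<in> {1..N}" for i
        using pint that by (intro Bochner_Integration.integrable_sum) auto
      have "expectation (\<lambda>\<omega>. \<Sum>i=1..N. \<Sum>j=1..N. D i \<omega> * D j \<omega>)
          = (\<Sum>i=1..N. expectation (\<lambda>\<omega>. \<Sum>j=1..N. D i \<omega> * D j \<omega>))"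
        by (rule Bochner_Integration.integral_sum[where f="\<lambda>i \<omega>. \<Sum>j=1..N. D i \<omega> * D j \<omega>"]) (rule intI)
      also have "\<dots> = (\<Sum>i=1..N. \<Sum>j=1..N. expectation (\<lambda>\<omega>. D i \<omega> * D j \<omega>))"
      proof (rule sum.cong[OF refl])
        fix i assume "i \<in> {1..N}"
        then show "expectation (\<lambda>\<omega>. \<Sum>j=1..N. D i \<omega> * D j \<omega>) = (\<Sum>j=1..N. expectation (\<lambda>\<omega>. D i \<omega> * D j \<omega>))"
          by (intro Bochner_Integration.integral_sum[where f="\<lambda>j \<omega>. D i \<omega> * D j \<omega>"] pint)
      qed
      finally show ?thesis .
    qed
    also have "\<dots> = (\<Sum>i=1..N. expectation (\<lambda>\<omega>. D i \<omega> * D i \<omega>))"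
      using inner by (rule sum.cong[OF refl])
    also have "\<dots> \<le> (\<Sum>i=1..N. V)" using diag by (intro sum_mono) auto
    also have "\<dots> = real N * V" by simp
    finally show ?thesis using int eq by simp
  qed
  have V0: "0 \<le> V"
  proof -
    have "0 \<le> expectation (\<lambda>\<omega>. (W 1 \<omega>)^2)" by (intro integral_nonneg_AE AE_I2) simp
    then show ?thesis using var[of 1] by linarith
  qed
  have measS: "(\<lambda>\<omega>. \<Sum>i=1..N. D i \<omega>) \<in> borel_measurable M" for N
    using measD by (intro borel_measurable_sum) auto
  have BC: "AE \<omega> in M. \<forall>\<^sub>F k in sequentially. \<bar>\<Sum>i=1..k^2. D i \<omega>\<bar> < real (k^2) / real (Suc j)" for j
  proof -
    define \<epsilon> where "\<epsilon> = 1 / real (Suc j)"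
    have e0: "0 < \<epsilon>" by (simp add: \<epsilon>_def)
    define A where "A k = {\<omega>\<in>space M. (\<epsilon> * real (k^2))^2 \<le> (\<Sum>i=1..k^2. D i \<omega>)^2}" for k
    have Asets: "A k \<in> sets M" for k
      unfolding A_def using measS[of "k^2"] by measurable
    have Ale: "measure M (A k) \<le> V / \<epsilon>^2 * inverse (real k ^ 2)" if k: "k \<ge> 1" for k
    proof -
      have pos: "0 < (\<epsilon> * real (k^2))^2" using e0 k by simp
      have "measure M (A k) \<le> expectation (\<lambda>\<omega>. (\<Sum>i=1..k^2. D i \<omega>)^2) / (\<epsilon> * real (k^2))^2"
        unfolding A_def using sumsq[of "k^2"] pos
        by (intro integral_Markov_inequality_measure[where A="space M"]) auto
      also have "\<dots> \<le> real (k^2) * V / (\<epsilon> * real (k^2))^2"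
        using sumsq[of "k^2"] pos by (intro divide_right_mono) auto
      also have "\<dots> = V / \<epsilon>^2 * inverse (real k ^ 2)"
        using k e0 by (simp add: field_simps power2_eq_square)
      finally show ?thesis .
    qed
    have "summable (\<lambda>k. V / \<epsilon>^2 * inverse (real k ^ 2))"
      by (intro summable_mult inverse_power_summable) auto
    then have "summable (\<lambda>k. measure M (A k))"
      by (rule summable_comparison_test'[where N=1]) (use Ale in auto)
    then have "AE \<omega> in M. \<forall>\<^sub>F k in sequentially. \<omega> \<in> space M - A k"
      using Asets by (intro borel_cantelli_AE1) (auto simp: emeasure_eq_measure)
    then show ?thesis
    proof (rule AE_mp, intro AE_I2 impI)
      fix \<omega> assume \<omega>: "\<omega> \<in> space M" and ev: "\<forall>\<^sub>F k in sequentially. \<omega> \<in> space M - A k"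
      show "\<forall>\<^sub>F k in sequentially. \<bar>\<Sum>i=1..k^2. D i \<omega>\<bar> < real (k^2) / real (Suc j)"
        using ev
      proof eventually_elim
        case (elim k)
        then have "(\<Sum>i=1..k^2. D i \<omega>)^2 < (\<epsilon> * real (k^2))^2" using \<omega> by (auto simp: A_def)
        then have "\<bar>\<Sum>i=1..k^2. D i \<omega>\<bar>^2 < (\<epsilon> * real (k^2))^2" by simp
        then have "\<bar>\<Sum>i=1..k^2. D i \<omega>\<bar> < \<epsilon> * real (k^2)"
          by (rule power2_less_imp_less) (use e0 in simp)
        then show ?case using e0 by (simp add: \<epsilon>_def)
      qed
    qed
  qed
  have "AE \<omega> in M. \<forall>j. \<forall>\<^sub>F k in sequentially. \<bar>\<Sum>i=1..k^2. D i \<omega>\<bar> < real (k^2) / real (Suc j)"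
    using BC by (subst AE_all_countable) auto
  then show ?thesis
  proof (rule AE_mp, intro AE_I2 impI)
    fix \<omega> assume \<omega>: "\<omega> \<in> space M"
      and ev: "\<forall>j. \<forall>\<^sub>F k in sequentially. \<bar>\<Sum>i=1..k^2. D i \<omega>\<bar> < real (k^2) / real (Suc j)"
    have limD: "(\<lambda>k. (\<Sum>i=1..k^2. D i \<omega>) / real (k^2)) \<longlonglongrightarrow> 0"
    proof (rule tendstoI)
      fix e :: real assume e: "0 < e"
      obtain j where j: "inverse (real (Suc j)) < e" using reals_Archimedean[OF e] by auto
      show "\<forall>\<^sub>F k in sequentially. dist ((\<Sum>i=1..k^2. D i \<omega>) / real (k^2)) 0 < e"
        using ev[rule_format, of j] eventually_gt_at_top[of "0::nat"]
      proof eventually_elim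
        case (elim k)
        have kp: "0 < real (k^2)" using elim by simp
        have "\<bar>(\<Sum>i=1..k^2. D i \<omega>) / real (k^2)\<bar> = \<bar>\<Sum>i=1..k^2. D i \<omega>\<bar> / real (k^2)"
          using kp by (simp add: abs_divide)
        also have "\<dots> < inverse (real (Suc j))"
          using elim(1) kp by (simp add: divide_less_eq field_simps)
        finally show ?case using j by simp
      qed
    qed
    have eqS: "(\<Sum>i=1..N. W i \<omega>) = (\<Sum>i=1..N. D i \<omega>) + real N * m" for N
      by (simp add: D_def sum_subtractf)
    have "(\<lambda>k. (\<Sum>i=1..k^2. D i \<omega>) / real (k^2) + m) \<longlonglongrightarrow> 0 + m"
      by (intro tendsto_add limD tendsto_const)
    moreover have "\<forall>\<^sub>F k in sequentially. (\<Sum>i=1..k^2. D i \<omega>) / real (k^2) + m = (\<Sum>i=1..k^2. W i \<omega>) / real (k^2)"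
      using eventually_gt_at_top[of "0::nat"]
      by eventually_elim (subst eqS, simp add: field_simps)
    ultimately have limW: "(\<lambda>k. (\<Sum>i=1..k^2. W i \<omega>) / real (k^2)) \<longlonglongrightarrow> m"
      by (simp add: tendsto_cong)
    show "(\<lambda>N. (\<Sum>i=1..N. W i \<omega>) / real N) \<longlonglongrightarrow> m"
    proof (rule interp_limit[OF _ _ limW])
      fix a b :: nat assume "a \<le> b"
      then have "{1..b} = {1..a} \<union> {a<..b}" by auto
      moreover have "0 \<le> (\<Sum>i\<in>{a<..b}. W i \<omega>)" using nonneg \<omega> by (intro sum_nonneg) auto
      ultimately show "(\<Sum>i=1..a. W i \<omega>) \<le> (\<Sum>i=1..b. W i \<omega>)"
        by (simp add: sum.union_disjoint ivl_disj_int)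
    next
      fix a show "0 \<le> (\<Sum>i=1..a. W i \<omega>)" using nonneg \<omega> by (intro sum_nonneg) auto
    qed
  qed
qed

end


context
  fixes th :: "nat \<Rightarrow> 'a" and ta :: "nat \<Rightarrow> nat" and A :: "'a set"
  assumes pos: "\<And>i. 1 \<le> i \<Longrightarrow> 1 \<le> ta i"
begin

lemma psum_0[simp]: "psum ta 0 = 0" by (simp add: psum_def)

lemma psum_Suc: "psum ta (Suc i) = psum ta i + ta (Suc i)"
  by (simp add: psum_def)

lemma psum_mono: "i \<le> j \<Longrightarrow> psum ta i \<le> psum ta j"
proof (induction j rule: dec_induct)
  case base then show ?case by simp
next
  case (step j) then show ?case by (simp add: psum_Suc)
qed

lemma psum_strict: "i < j \<Longrightarrow> psum ta i < psum ta j"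
proof -
  assume "i < j"
  then have "Suc i \<le> j" by simp
  then have "psum ta (Suc i) \<le> psum ta j" by (rule psum_mono)
  moreover have "psum ta i < psum ta (Suc i)" using pos[of "Suc i"] by (simp add: psum_Suc)
  ultimately show ?thesis by simp
qed

lemma psum_ge: "i \<le> psum ta i"
proof (induction i)
  case 0 then show ?case by simp
next
  case (Suc i) then show ?case using pos[of "Suc i"] by (simp add: psum_Suc)
qed

lemma state_proc_eq:
  assumes i: "1 \<le> i" "psum ta (i - 1) < t" "t \<le> psum ta i"
  shows "state_proc th ta t = th i"
proof -
  have "(THE i. 1 \<le> i \<and> psum ta (i - 1) < t \<and> t \<le> psum ta i) = i"
  proof (rule the_equality)
    show "1 \<le> i \<and> psum ta (i - 1) < t \<and> t \<le> psum ta i" using i by simp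
    fix i' assume i': "1 \<le> i' \<and> psum ta (i' - 1) < t \<and> t \<le> psum ta i'"
    show "i' = i"
    proof (rule ccontr)
      assume "i' \<noteq> i"
      then have "i' < i \<or> i < i'" by linarith
      then show False
      proof
        assume "i' < i"
        then have "psum ta i' \<le> psum ta (i - 1)" by (intro psum_mono) simp
        then show False using i i' by simp
      next
        assume "i < i'"
        then have "psum ta i \<le> psum ta (i' - 1)" by (intro psum_mono) simp
        then show False using i i' by simp
      qed
    qed
  qed
  then show ?thesis by (simp add: state_proc_def)
qed

definition Rn :: "nat \<Rightarrow> nat" where
  "Rn N = (\<Sum>i\<in>{1..N}. if th i \<in> A then ta i else 0)"

definition Cn :: "nat \<Rightarrow> nat" where
  "Cn T = card {t \<in> {1..T}. state_proc th ta t \<in> A}"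

lemma Cn_mono: "T1 \<le> T2 \<Longrightarrow> Cn T1 \<le> Cn T2"
  unfolding Cn_def by (intro card_mono) auto

lemma Cn_psum: "Cn (psum ta N) = Rn N"
proof (induction N)
  case 0 then show ?case by (simp add: Cn_def Rn_def)
next
  case (Suc N)
  let ?P = "\<lambda>t. state_proc th ta t \<in> A"
  have split: "{t \<in> {1..psum ta (Suc N)}. ?P t} = {t \<in> {1..psum ta N}. ?P t} \<union> {t \<in> {psum ta N<..psum ta (Suc N)}. ?P t}"
    using psum_mono[of N "Suc N"] by auto
  have disj: "{t \<in> {1..psum ta N}. ?P t} \<inter> {t \<in> {psum ta N<..psum ta (Suc N)}. ?P t} = {}" by auto
  have st: "state_proc th ta t = th (Suc N)" if "t \<in> {psum ta N<..psum ta (Suc N)}" for t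
    using state_proc_eq[of "Suc N" t] that by simp
  have second: "card {t \<in> {psum ta N<..psum ta (Suc N)}. ?P t} = (if th (Suc N) \<in> A then ta (Suc N) else 0)"
  proof (cases "th (Suc N) \<in> A")
    case True
    then have "{t \<in> {psum ta N<..psum ta (Suc N)}. ?P t} = {psum ta N<..psum ta (Suc N)}" using st by auto
    then show ?thesis using True by (simp add: psum_Suc)
  next
    case False
    then have "{t \<in> {psum ta N<..psum ta (Suc N)}. ?P t} = {}" using st by auto
    then show ?thesis using False by simp
  qed
  have "Cn (psum ta (Suc N)) = Cn (psum ta N) + card {t \<in> {psum ta N<..psum ta (Suc N)}. ?P t}"
    unfolding Cn_def split by (rule card_Un_disjoint) (use disj in auto)
  also have "\<dots> = Rn (Suc N)" using Suc.IH second by (simp add: Rn_def)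
  finally show ?case .
qed

definition Nf :: "nat \<Rightarrow> nat" where "Nf T = (LEAST j. T < psum ta (Suc j))"

lemma Nf_props: "psum ta (Nf T) \<le> T \<and> T < psum ta (Suc (Nf T))"
proof -
  have ex: "\<exists>j. T < psum ta (Suc j)" using psum_ge[of "Suc T"] by (intro exI[of _ T]) simp
  have 1: "T < psum ta (Suc (Nf T))" unfolding Nf_def by (rule LeastI_ex[OF ex])
  have 2: "psum ta (Nf T) \<le> T"
  proof (cases "Nf T")
    case 0 then show ?thesis by simp
  next
    case (Suc j)
    then have "j < Nf T" by simp
    then have "\<not> T < psum ta (Suc j)" unfolding Nf_def by (rule not_less_Least)
    then show ?thesis using Suc by simp
  qed
  show ?thesis using 1 2 by simp
qed

lemma Nf_at_top: "filterlim Nf at_top sequentially"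
proof (subst filterlim_at_top, intro allI)
  fix K
  show "\<forall>\<^sub>F T in sequentially. K \<le> Nf T"
    using eventually_ge_at_top[of "psum ta K"]
  proof eventually_elim
    case (elim T)
    have "psum ta K < psum ta (Suc (Nf T))" using elim Nf_props[of T] by simp
    then have "K < Suc (Nf T)" using psum_mono[of "Suc (Nf T)" K] by (cases "K < Suc (Nf T)") auto
    then show ?case by simp
  qed
qed

lemma renewal:
  assumes limS: "(\<lambda>N. (\<Sum>i=1..N. real (ta i)) / real N) \<longlonglongrightarrow> b" and b: "b > 0"
    and limR: "(\<lambda>N. (\<Sum>i=1..N. real (ta i) * indicator A (th i)) / real N) \<longlonglongrightarrow> a"
  shows "(\<lambda>T. occupation th ta A T) \<longlonglongrightarrow> a / b"
proof -
  have rS: "real (psum ta N) = (\<Sum>i=1..N. real (ta i))" for N by (simp add: psum_def)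
  have rR: "real (Rn N) = (\<Sum>i=1..N. real (ta i) * indicator A (th i))" for N
    unfolding Rn_def of_nat_sum by (intro sum.cong refl) (simp add: indicator_def)
  define s where "s N = real (psum ta N) / real N" for N
  define r where "r N = real (Rn N) / real N" for N
  have ls: "s \<longlonglongrightarrow> b" using limS by (simp add: s_def[abs_def] rS)
  have lr: "r \<longlonglongrightarrow> a" using limR by (simp add: r_def[abs_def] rR)
  have psum_pos: "0 < real (psum ta N)" if "N \<ge> 1" for N
    using psum_ge[of N] that by simp
  define lo where "lo N = real (Rn N) / real (psum ta (Suc N))" for N
  define hi where "hi N = real (Rn (Suc N)) / real (psum ta N)" for N
  have "(\<lambda>N. r N * (real N / real (Suc N)) / s (Suc N)) \<longlonglongrightarrow> a * 1 / b"
    using b by (intro tendsto_divide tendsto_mult lr LIMSEQ_n_over_Suc_n LIMSEQ_Suc[OF ls]) auto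
  moreover have "\<forall>\<^sub>F N in sequentially. r N * (real N / real (Suc N)) / s (Suc N) = lo N"
    using eventually_gt_at_top[of "0::nat"]
  proof eventually_elim
    case (elim N)
    have "0 < real (psum ta (Suc N))" using psum_pos[of "Suc N"] by simp
    then show ?case using elim by (simp add: r_def s_def lo_def field_simps del: of_nat_Suc)
  qed
  ultimately have llo: "lo \<longlonglongrightarrow> a / b" by (simp add: tendsto_cong)
  have "(\<lambda>N. r (Suc N) * (real (Suc N) / real N) / s N) \<longlonglongrightarrow> a * 1 / b"
    using b by (intro tendsto_divide tendsto_mult LIMSEQ_Suc[OF lr] LIMSEQ_Suc_n_over_n ls) auto
  moreover have "\<forall>\<^sub>F N in sequentially. r (Suc N) * (real (Suc N) / real N) / s N = hi N"
    using eventually_gt_at_top[of "0::nat"]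
  proof eventually_elim
    case (elim N)
    have "0 < real (psum ta N)" using psum_pos[of N] elim by simp
    then show ?case using elim by (simp add: r_def s_def hi_def field_simps del: of_nat_Suc)
  qed
  ultimately have lhi: "hi \<longlonglongrightarrow> a / b" by (simp add: tendsto_cong)
  have ev1: "\<forall>\<^sub>F T in sequentially. 1 \<le> Nf T"
    using Nf_at_top by (simp add: filterlim_at_top)
  have low: "\<forall>\<^sub>F T in sequentially. lo (Nf T) \<le> occupation th ta A T"
    using ev1
  proof eventually_elim
    case (elim T)
    let ?N = "Nf T"
    have p1: "psum ta ?N \<le> T" "T < psum ta (Suc ?N)" using Nf_props[of T] by auto
    have Tpos: "0 < real T" using psum_ge[of ?N] elim p1 by simp
    have "Rn ?N \<le> Cn T" using Cn_mono[OF p1(1)] Cn_psum[of ?N] by simp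
    then have "lo ?N \<le> real (Cn T) / real (psum ta (Suc ?N))"
      unfolding lo_def by (intro divide_right_mono) auto
    also have "\<dots> \<le> real (Cn T) / real T"
      using p1 Tpos by (intro divide_left_mono) auto
    finally show ?case by (simp add: occupation_def Cn_def)
  qed
  have high: "\<forall>\<^sub>F T in sequentially. occupation th ta A T \<le> hi (Nf T)"
    using ev1
  proof eventually_elim
    case (elim T)
    let ?N = "Nf T"
    have p1: "psum ta ?N \<le> T" "T < psum ta (Suc ?N)" using Nf_props[of T] by auto
    have pp: "0 < real (psum ta ?N)" using psum_pos[of ?N] elim by simp
    have "Cn T \<le> Rn (Suc ?N)" using Cn_mono[of T "psum ta (Suc ?N)"] p1 Cn_psum[of "Suc ?N"] by simp
    then have "real (Cn T) / real T \<le> real (Rn (Suc ?N)) / real T"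
      by (intro divide_right_mono) auto
    also have "\<dots> \<le> hi ?N"
      unfolding hi_def using p1 pp by (intro divide_left_mono) auto
    finally show ?case by (simp add: occupation_def Cn_def)
  qed
  show ?thesis
    by (rule tendsto_sandwich[OF low high filterlim_compose[OF llo Nf_at_top] filterlim_compose[OF lhi Nf_at_top]])
qed

end


lemma ret_prob_0: "ret_prob n E 0 = 0"
  unfolding ret_prob_def by auto

lemma tau_dist_0: "tau_dist n p 0 = 0"
  by (simp add: tau_dist_def ret_prob_0)

lemma real_le_sq: "real k \<le> real k ^ 2"
  by (cases k) (auto simp: power2_eq_square)

lemma abs_er_prob_le1: "0 \<le> p \<Longrightarrow> p \<le> 1 \<Longrightarrow> \<bar>er_prob n p E\<bar> \<le> 1"
  using er_prob_nonneg er_prob_le1 by (simp add: abs_of_nonneg)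

lemma tau_dist_abs_bound:
  assumes "0 \<le> p" "p \<le> 1"
  shows "\<bar>tau_dist n p k\<bar> \<le> (\<Sum>E\<in>Pow (all_edges n). \<bar>ret_prob n E k\<bar>)"
proof -
  have "\<bar>tau_dist n p k\<bar> \<le> (\<Sum>E\<in>Pow (all_edges n). \<bar>er_prob n p E * ret_prob n E k\<bar>)"
    unfolding tau_dist_def by (rule sum_abs)
  also have "\<dots> \<le> (\<Sum>E\<in>Pow (all_edges n). \<bar>ret_prob n E k\<bar>)"
  proof (rule sum_mono)
    fix E
    have "\<bar>er_prob n p E\<bar> * \<bar>ret_prob n E k\<bar> \<le> 1 * \<bar>ret_prob n E k\<bar>"
      using abs_er_prob_le1[OF assms] by (intro mult_right_mono) auto
    then show "\<bar>er_prob n p E * ret_prob n E k\<bar> \<le> \<bar>ret_prob n E k\<bar>" by (simp add: abs_mult)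
  qed
  finally show ?thesis .
qed

lemma exp_tau_abs_bound:
  assumes "0 \<le> p" "p \<le> 1"
  shows "\<bar>exp_tau n p\<bar> \<le> (\<Sum>E\<in>Pow (all_edges n). \<bar>exp_ret n E\<bar>)"
proof -
  have "\<bar>exp_tau n p\<bar> \<le> (\<Sum>E\<in>Pow (all_edges n). \<bar>er_prob n p E * exp_ret n E\<bar>)"
    unfolding exp_tau_def by (rule sum_abs)
  also have "\<dots> \<le> (\<Sum>E\<in>Pow (all_edges n). \<bar>exp_ret n E\<bar>)"
  proof (rule sum_mono)
    fix E
    have "\<bar>er_prob n p E\<bar> * \<bar>exp_ret n E\<bar> \<le> 1 * \<bar>exp_ret n E\<bar>"
      using abs_er_prob_le1[OF assms] by (intro mult_right_mono) auto
    then show "\<bar>er_prob n p E * exp_ret n E\<bar> \<le> \<bar>exp_ret n E\<bar>" by (simp add: abs_mult)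
  qed
  finally show ?thesis .
qed

lemma exp_tau_nonneg:
  assumes n1: "n \<ge> 1" and p: "0 \<le> p" "p \<le> 1"
  shows "0 \<le> exp_tau n p"
proof -
  have "summable (\<lambda>k. real k * tau_dist n p k)"
    by (rule summable_tau_moment[OF n1 p], simp, rule real_le_sq)
  then have "0 \<le> (\<Sum>k. real k * tau_dist n p k)"
    using tau_dist_nonneg[OF p] by (intro suminf_nonneg) auto
  then show ?thesis using exp_tau_series[OF n1 p] by simp
qed

theorem proposition1:
  fixes n :: nat
    and M :: "'m measure" and \<mu> :: "'a measure"
    and g :: "'a \<Rightarrow> real"
    and \<theta> :: "nat \<Rightarrow> 'm \<Rightarrow> 'a" and \<tau> :: "nat \<Rightarrow> 'm \<Rightarrow> nat"
  assumes n2: "n \<ge> 2"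
    and M_prob: "prob_space M"
    and mu_prob: "prob_space \<mu>"
    and g_meas: "g \<in> borel_measurable \<mu>"
    and g_range: "\<And>x. x \<in> space \<mu> \<Longrightarrow> 0 < g x \<and> g x \<le> 1"
    and indep: "prob_space.indep_vars M (\<lambda>i. \<mu> \<Otimes>\<^sub>M count_space UNIV)
                  (\<lambda>i \<omega>. (\<theta> i \<omega>, \<tau> i \<omega>)) {1..}"
    and joint_law: "\<And>i A k. i \<ge> 1 \<Longrightarrow> A \<in> sets \<mu> \<Longrightarrow>
                  measure M {\<omega> \<in> space M. \<theta> i \<omega> \<in> A \<and> \<tau> i \<omega> = k}
                  = set_lebesgue_integral \<mu> A (\<lambda>x. tau_dist n (g x) k)"
    and A: "A \<in> sets \<mu>"
  shows "AE \<omega> in M. (\<lambda>T. occupation (\<lambda>i. \<theta> i \<omega>) (\<lambda>i. \<tau> i \<omega>) A T)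
            \<longlonglongrightarrow> set_lebesgue_integral \<mu> A (\<lambda>x. exp_tau n (g x))
                / integral\<^sup>L \<mu> (\<lambda>x. exp_tau n (g x))"
proof -
  interpret M: prob_space M by (rule M_prob)
  interpret mu: prob_space \<mu> by (rule mu_prob)
  have n1: "n \<ge> 1" using n2 by simp
  have gr: "0 \<le> g x" "g x \<le> 1" if "x \<in> space \<mu>" for x using g_range[OF that] by auto
  note [measurable] = g_meas
  have rvZ: "(\<lambda>\<omega>. (\<theta> i \<omega>, \<tau> i \<omega>)) \<in> measurable M (\<mu> \<Otimes>\<^sub>M count_space UNIV)" if "1 \<le> i" for i
    using indep that unfolding M.indep_vars_def by auto
  have meas_th: "\<theta> i \<in> measurable M \<mu>" if "1 \<le> i" for i
    using measurable_compose[OF rvZ[OF that] measurable_fst] by (simp add: comp_def)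
  have meas_ta: "\<tau> i \<in> measurable M (count_space UNIV)" if "1 \<le> i" for i
    using measurable_compose[OF rvZ[OF that] measurable_snd] by (simp add: comp_def)
  have meas_TD: "(\<lambda>x. tau_dist n (g x) k) \<in> borel_measurable \<mu>" for k
    unfolding tau_dist_def er_prob_def by measurable
  have meas_ET: "(\<lambda>x. exp_tau n (g x)) \<in> borel_measurable \<mu>"
    unfolding exp_tau_def er_prob_def by measurable
  have setnn: "ennreal (set_lebesgue_integral \<mu> B (\<lambda>x. tau_dist n (g x) k))
      = (\<integral>\<^sup>+x. ennreal (indicator B x * tau_dist n (g x) k) \<partial>\<mu>)" if B: "B \<in> sets \<mu>" for B k
  proof -
    have int: "integrable \<mu> (\<lambda>x. indicator B x * tau_dist n (g x) k)"
    proof (rule mu.integrable_const_bound[where B="\<Sum>E\<in>Pow (all_edges n). \<bar>ret_prob n E k\<bar>"])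
      show "AE x in \<mu>. norm (indicator B x * tau_dist n (g x) k) \<le> (\<Sum>E\<in>Pow (all_edges n). \<bar>ret_prob n E k\<bar>)"
      proof (rule AE_I2)
        fix x assume x: "x \<in> space \<mu>"
        have "\<bar>indicator B x * tau_dist n (g x) k\<bar> \<le> \<bar>tau_dist n (g x) k\<bar>"
          by (simp add: abs_mult indicator_def)
        also have "\<dots> \<le> (\<Sum>E\<in>Pow (all_edges n). \<bar>ret_prob n E k\<bar>)"
          using tau_dist_abs_bound gr[OF x] by blast
        finally show "norm (indicator B x * tau_dist n (g x) k) \<le> (\<Sum>E\<in>Pow (all_edges n). \<bar>ret_prob n E k\<bar>)"
          by simp
      qed
      show "(\<lambda>x. indicator B x * tau_dist n (g x) k) \<in> borel_measurable \<mu>"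
        using meas_TD B by measurable
    qed
    have "set_lebesgue_integral \<mu> B (\<lambda>x. tau_dist n (g x) k) = (\<integral>x. indicator B x * tau_dist n (g x) k \<partial>\<mu>)"
      by (simp add: set_lebesgue_integral_def)
    moreover have "(\<integral>\<^sup>+x. ennreal (indicator B x * tau_dist n (g x) k) \<partial>\<mu>) = ennreal (\<integral>x. indicator B x * tau_dist n (g x) k \<partial>\<mu>)"
      by (rule nn_integral_eq_integral[OF int]) (auto intro!: AE_I2 simp: tau_dist_nonneg gr)
    ultimately show ?thesis by simp
  qed
  have mom: "(\<integral>\<^sup>+\<omega>. ennreal (f (\<tau> i \<omega>) * indicator B (\<theta> i \<omega>)) \<partial>M)
      = (\<integral>\<^sup>+x. ennreal (indicator B x * (\<Sum>k. f k * tau_dist n (g x) k)) \<partial>\<mu>)"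
    if i: "1 \<le> i" and B: "B \<in> sets \<mu>" and f0: "\<And>k. 0 \<le> f k" and f2: "\<And>k. f k \<le> real k ^ 2"
    for i B and f :: "nat \<Rightarrow> real"
  proof -
    note [measurable] = meas_th[OF i] meas_ta[OF i] B
    define S where "S k = {\<omega>\<in>space M. \<theta> i \<omega> \<in> B \<and> \<tau> i \<omega> = k}" for k
    have Ssets[measurable]: "S k \<in> sets M" for k unfolding S_def by measurable
    have pt: "ennreal (f (\<tau> i \<omega>) * indicator B (\<theta> i \<omega>)) = (\<Sum>k. ennreal (f k) * indicator (S k) \<omega>)"
      if \<omega>: "\<omega> \<in> space M" for \<omega>
    proof -
      have "(\<lambda>k. ennreal (f k) * indicator (S k) \<omega>)
          = (\<lambda>k. if k = \<tau> i \<omega> then ennreal (f (\<tau> i \<omega>) * indicator B (\<theta> i \<omega>)) else 0)"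
        using \<omega> f0 by (auto simp: S_def indicator_def)
      moreover have "(\<lambda>k. if k = \<tau> i \<omega> then ennreal (f (\<tau> i \<omega>) * indicator B (\<theta> i \<omega>)) else 0)
          sums ennreal (f (\<tau> i \<omega>) * indicator B (\<theta> i \<omega>))"
        using sums_single[of "\<tau> i \<omega>" "\<lambda>_. ennreal (f (\<tau> i \<omega>) * indicator B (\<theta> i \<omega>))"] by simp
      ultimately show ?thesis by (simp add: sums_iff)
    qed
    have "(\<integral>\<^sup>+\<omega>. ennreal (f (\<tau> i \<omega>) * indicator B (\<theta> i \<omega>)) \<partial>M)
        = (\<integral>\<^sup>+\<omega>. (\<Sum>k. ennreal (f k) * indicator (S k) \<omega>) \<partial>M)"
      by (rule nn_integral_cong) (rule pt)
    also have "\<dots> = (\<Sum>k. \<integral>\<^sup>+\<omega>. ennreal (f k) * indicator (S k) \<omega> \<partial>M)"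
      by (rule nn_integral_suminf) measurable
    also have "\<dots> = (\<Sum>k. ennreal (f k) * ennreal (set_lebesgue_integral \<mu> B (\<lambda>x. tau_dist n (g x) k)))"
    proof (rule suminf_cong)
      fix k
      have "(\<integral>\<^sup>+\<omega>. ennreal (f k) * indicator (S k) \<omega> \<partial>M) = ennreal (f k) * emeasure M (S k)"
        by (rule nn_integral_cmult_indicator) simp
      also have "emeasure M (S k) = ennreal (set_lebesgue_integral \<mu> B (\<lambda>x. tau_dist n (g x) k))"
        using joint_law[OF i B, of k] by (simp add: M.emeasure_eq_measure S_def)
      finally show "(\<integral>\<^sup>+\<omega>. ennreal (f k) * indicator (S k) \<omega> \<partial>M)
          = ennreal (f k) * ennreal (set_lebesgue_integral \<mu> B (\<lambda>x. tau_dist n (g x) k))" .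
    qed
    also have "\<dots> = (\<Sum>k. \<integral>\<^sup>+x. ennreal (f k) * ennreal (indicator B x * tau_dist n (g x) k) \<partial>\<mu>)"
    proof (rule suminf_cong)
      fix k
      show "ennreal (f k) * ennreal (set_lebesgue_integral \<mu> B (\<lambda>x. tau_dist n (g x) k))
          = (\<integral>\<^sup>+x. ennreal (f k) * ennreal (indicator B x * tau_dist n (g x) k) \<partial>\<mu>)"
        by (subst nn_integral_cmult) (use meas_TD[of k] in \<open>measurable, simp add: setnn[OF B]\<close>)
    qed
    also have "\<dots> = (\<integral>\<^sup>+x. (\<Sum>k. ennreal (f k) * ennreal (indicator B x * tau_dist n (g x) k)) \<partial>\<mu>)"
      by (rule nn_integral_suminf[symmetric]) (use meas_TD in measurable)
    also have "\<dots> = (\<integral>\<^sup>+x. ennreal (indicator B x * (\<Sum>k. f k * tau_dist n (g x) k)) \<partial>\<mu>)"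
    proof (rule nn_integral_cong)
      fix x assume x: "x \<in> space \<mu>"
      have td0: "0 \<le> tau_dist n (g x) k" for k using tau_dist_nonneg gr[OF x] by blast
      have sm: "summable (\<lambda>k. f k * tau_dist n (g x) k)"
        by (rule summable_tau_moment[OF n1 gr[OF x] f0 f2])
      have "(\<Sum>k. ennreal (f k) * ennreal (indicator B x * tau_dist n (g x) k))
          = (\<Sum>k. ennreal (indicator B x * (f k * tau_dist n (g x) k)))"
        using f0 td0 by (intro suminf_cong) (simp add: ennreal_mult'[symmetric] mult_ac)
      also have "\<dots> = ennreal (\<Sum>k. indicator B x * (f k * tau_dist n (g x) k))"
        using f0 td0 sm by (intro suminf_ennreal2 summable_mult) auto
      also have "(\<Sum>k. indicator B x * (f k * tau_dist n (g x) k)) = indicator B x * (\<Sum>k. f k * tau_dist n (g x) k)"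
        using sm by (rule suminf_mult)
      finally show "(\<Sum>k. ennreal (f k) * ennreal (indicator B x * tau_dist n (g x) k))
          = ennreal (indicator B x * (\<Sum>k. f k * tau_dist n (g x) k))" .
    qed
    finally show ?thesis .
  qed
  define X where "X B i \<omega> = real (\<tau> i \<omega>) * indicator B (\<theta> i \<omega>)" for B i \<omega>
  define aB where "aB B = set_lebesgue_integral \<mu> B (\<lambda>x. exp_tau n (g x))" for B
  have measX: "X B i \<in> borel_measurable M" if i: "1 \<le> i" and B: "B \<in> sets \<mu>" for i B
  proof -
    note [measurable] = meas_th[OF i] meas_ta[OF i] B
    show ?thesis unfolding X_def[abs_def] by measurable
  qed
  have X0: "0 \<le> X B i \<omega>" for B i \<omega> by (simp add: X_def)
  have intET: "integrable \<mu> (\<lambda>x. indicator B x * exp_tau n (g x))" if B: "B \<in> sets \<mu>" for B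
  proof (rule mu.integrable_const_bound[where B="\<Sum>E\<in>Pow (all_edges n). \<bar>exp_ret n E\<bar>"])
    show "AE x in \<mu>. norm (indicator B x * exp_tau n (g x)) \<le> (\<Sum>E\<in>Pow (all_edges n). \<bar>exp_ret n E\<bar>)"
    proof (rule AE_I2)
      fix x assume x: "x \<in> space \<mu>"
      have "\<bar>indicator B x * exp_tau n (g x)\<bar> \<le> \<bar>exp_tau n (g x)\<bar>"
        by (simp add: abs_mult indicator_def)
      also have "\<dots> \<le> (\<Sum>E\<in>Pow (all_edges n). \<bar>exp_ret n E\<bar>)"
        using exp_tau_abs_bound gr[OF x] by blast
      finally show "norm (indicator B x * exp_tau n (g x)) \<le> (\<Sum>E\<in>Pow (all_edges n). \<bar>exp_ret n E\<bar>)"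
        by simp
    qed
    show "(\<lambda>x. indicator B x * exp_tau n (g x)) \<in> borel_measurable \<mu>"
      using meas_ET B by measurable
  qed
  have aB_nn: "ennreal (aB B) = (\<integral>\<^sup>+x. ennreal (indicator B x * exp_tau n (g x)) \<partial>\<mu>) \<and> 0 \<le> aB B"
    if B: "B \<in> sets \<mu>" for B
  proof -
    have nnx: "AE x in \<mu>. 0 \<le> indicator B x * exp_tau n (g x)"
      by (rule AE_I2) (simp add: exp_tau_nonneg[OF n1] gr)
    have "aB B = (\<integral>x. indicator B x * exp_tau n (g x) \<partial>\<mu>)"
      by (simp add: aB_def set_lebesgue_integral_def)
    moreover have "(\<integral>\<^sup>+x. ennreal (indicator B x * exp_tau n (g x)) \<partial>\<mu>) = ennreal (\<integral>x. indicator B x * exp_tau n (g x) \<partial>\<mu>)"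
      by (rule nn_integral_eq_integral[OF intET[OF B] nnx])
    moreover have "0 \<le> (\<integral>x. indicator B x * exp_tau n (g x) \<partial>\<mu>)"
      by (rule integral_nonneg_AE[OF nnx])
    ultimately show ?thesis by simp
  qed
  have E1: "integrable M (X B i) \<and> M.expectation (X B i) = aB B" if i: "1 \<le> i" and B: "B \<in> sets \<mu>" for i B
  proof -
    have "(\<integral>\<^sup>+\<omega>. ennreal (X B i \<omega>) \<partial>M)
        = (\<integral>\<^sup>+x. ennreal (indicator B x * (\<Sum>k. real k * tau_dist n (g x) k)) \<partial>\<mu>)"
      unfolding X_def by (rule mom[OF i B], simp, rule real_le_sq)
    also have "\<dots> = (\<integral>\<^sup>+x. ennreal (indicator B x * exp_tau n (g x)) \<partial>\<mu>)"
      by (rule nn_integral_cong) (simp add: exp_tau_series[OF n1] gr)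
    also have "\<dots> = ennreal (aB B)" using aB_nn[OF B] by simp
    finally have nn: "(\<integral>\<^sup>+\<omega>. ennreal (X B i \<omega>) \<partial>M) = ennreal (aB B)" .
    have int: "integrable M (X B i)"
      by (rule integrableI_nonneg[OF measX[OF i B]]) (auto simp: X0 nn)
    have "M.expectation (X B i) = enn2real (\<integral>\<^sup>+\<omega>. ennreal (X B i \<omega>) \<partial>M)"
      using integral_eq_nn_integral[OF measX[OF i B]] X0 by simp
    also have "\<dots> = aB B" unfolding nn using conjunct2[OF aB_nn[OF B]] by simp
    finally show ?thesis using int by simp
  qed
  obtain V0 where V0: "\<forall>p. 0 \<le> p \<longrightarrow> p \<le> 1 \<longrightarrow> (\<Sum>k. real k ^ 2 * tau_dist n p k) \<le> V0"
    using tau_moment_bound[OF n1] by blast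
  define V where "V = max V0 0"
  have E2: "integrable M (\<lambda>\<omega>. (X B i \<omega>)^2) \<and> M.expectation (\<lambda>\<omega>. (X B i \<omega>)^2) \<le> V"
    if i: "1 \<le> i" and B: "B \<in> sets \<mu>" for i B
  proof -
    have sq: "(X B i \<omega>)^2 = real (\<tau> i \<omega>) ^ 2 * indicator B (\<theta> i \<omega>)" for \<omega>
      by (simp add: X_def power_mult_distrib indicator_def)
    have measX2: "(\<lambda>\<omega>. (X B i \<omega>)^2) \<in> borel_measurable M" using measX[OF i B] by measurable
    have "(\<integral>\<^sup>+\<omega>. ennreal ((X B i \<omega>)^2) \<partial>M)
        = (\<integral>\<^sup>+x. ennreal (indicator B x * (\<Sum>k. real k ^ 2 * tau_dist n (g x) k)) \<partial>\<mu>)"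
      unfolding sq by (rule mom[OF i B]) simp_all
    also have "\<dots> \<le> (\<integral>\<^sup>+x. ennreal V \<partial>\<mu>)"
    proof (rule nn_integral_mono)
      fix x assume x: "x \<in> space \<mu>"
      have sm: "summable (\<lambda>k. real k ^ 2 * tau_dist n (g x) k)"
        by (rule summable_tau_moment[OF n1 gr[OF x]]) simp_all
      have s0: "0 \<le> (\<Sum>k. real k ^ 2 * tau_dist n (g x) k)"
        using sm tau_dist_nonneg[OF gr[OF x]] by (intro suminf_nonneg) auto
      have "indicator B x * (\<Sum>k. real k ^ 2 * tau_dist n (g x) k) \<le> V"
        using V0 gr[OF x] s0 by (auto simp: V_def indicator_def)
      then show "ennreal (indicator B x * (\<Sum>k. real k ^ 2 * tau_dist n (g x) k)) \<le> ennreal V"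
        by (rule ennreal_leI)
    qed
    also have "\<dots> = ennreal V" by (simp add: mu.emeasure_space_1)
    finally have nn: "(\<integral>\<^sup>+\<omega>. ennreal ((X B i \<omega>)^2) \<partial>M) \<le> ennreal V" .
    have int: "integrable M (\<lambda>\<omega>. (X B i \<omega>)^2)"
      by (rule integrableI_nonneg[OF measX2]) (use nn in \<open>auto simp: top.not_eq_extremum intro: le_less_trans\<close>)
    have "M.expectation (\<lambda>\<omega>. (X B i \<omega>)^2) = enn2real (\<integral>\<^sup>+\<omega>. ennreal ((X B i \<omega>)^2) \<partial>M)"
      using integral_eq_nn_integral[OF measX2] by simp
    also have "\<dots> \<le> V" by (rule enn2real_leI[OF _ nn]) (simp add: V_def)
    finally show ?thesis using int by simp
  qed
  have indepX: "M.indep_vars (\<lambda>_. borel) (X B) {1..}" if B: "B \<in> sets \<mu>" for B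
  proof -
    note [measurable] = B
    have "M.indep_vars (\<lambda>_. borel) (\<lambda>i \<omega>. (\<lambda>p. real (snd p) * indicator B (fst p)) (\<theta> i \<omega>, \<tau> i \<omega>)) {1..}"
      by (rule M.indep_vars_compose2[OF indep]) measurable
    then show ?thesis by (simp add: X_def[abs_def])
  qed
  have gen: "AE \<omega> in M. (\<lambda>N. (\<Sum>i=1..N. X B i \<omega>) / real N) \<longlonglongrightarrow> aB B" if B: "B \<in> sets \<mu>" for B
    by (rule M.slln_sq[OF indepX[OF B], where V=V]) (use E1 E2 B X0 in auto)
  have tpos: "AE \<omega> in M. \<forall>i. 1 \<le> i \<longrightarrow> 1 \<le> \<tau> i \<omega>"
  proof (subst AE_all_countable, intro allI)
    fix i :: nat
    show "AE \<omega> in M. 1 \<le> i \<longrightarrow> 1 \<le> \<tau> i \<omega>"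
    proof (cases "1 \<le> i")
      case False then show ?thesis by simp
    next
      case i: True
      note [measurable] = meas_th[OF i] meas_ta[OF i]
      define N where "N = {\<omega>\<in>space M. \<theta> i \<omega> \<in> space \<mu> \<and> \<tau> i \<omega> = 0}"
      have Ns: "N \<in> sets M" unfolding N_def by measurable
      have "measure M N = 0"
        using joint_law[OF i sets.top, of 0] by (simp add: N_def tau_dist_0 set_lebesgue_integral_def)
      then have "N \<in> null_sets M" using Ns by (simp add: M.emeasure_eq_measure null_sets_def)
      then have "AE \<omega> in M. \<omega> \<notin> N" by (rule AE_not_in)
      then show ?thesis
      proof (rule AE_mp, intro AE_I2 impI)
        fix \<omega> assume \<omega>: "\<omega> \<in> space M" "\<omega> \<notin> N"
        have "\<theta> i \<omega> \<in> space \<mu>" using measurable_space[OF meas_th[OF i] \<omega>(1)] .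
        then show "1 \<le> \<tau> i \<omega>" using \<omega> by (auto simp: N_def)
      qed
    qed
  qed
  have bsp: "integral\<^sup>L \<mu> (\<lambda>x. exp_tau n (g x)) = aB (space \<mu>)"
  proof -
    have "integrable \<mu> (\<lambda>x. exp_tau n (g x))"
    proof -
      have "integrable \<mu> (\<lambda>x. exp_tau n (g x)) \<longleftrightarrow> integrable \<mu> (\<lambda>x. indicator (space \<mu>) x * exp_tau n (g x))"
        by (rule Bochner_Integration.integrable_cong) (auto simp: indicator_def)
      then show ?thesis using intET[OF sets.top] by simp
    qed
    then show ?thesis by (simp add: aB_def set_integral_space)
  qed
  have Xsp: "X (space \<mu>) i \<omega> = real (\<tau> i \<omega>)" if i: "1 \<le> i" and \<omega>: "\<omega> \<in> space M" for i \<omega>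
    using measurable_space[OF meas_th[OF i] \<omega>] by (simp add: X_def)
  have bpos: "0 < aB (space \<mu>)"
  proof -
    have "1 \<le> M.expectation (X (space \<mu>) 1)"
    proof (rule M.integral_ge_const)
      show "integrable M (X (space \<mu>) 1)" using E1[of 1 "space \<mu>"] by simp
      show "AE \<omega> in M. 1 \<le> X (space \<mu>) 1 \<omega>"
        using tpos by (rule AE_mp) (auto intro!: AE_I2 simp: Xsp)
    qed
    then show ?thesis using E1[of 1 "space \<mu>"] by simp
  qed
  have "AE \<omega> in M. (\<forall>i. 1 \<le> i \<longrightarrow> 1 \<le> \<tau> i \<omega>)
      \<and> (\<lambda>N. (\<Sum>i=1..N. X A i \<omega>) / real N) \<longlonglongrightarrow> aB A
      \<and> (\<lambda>N. (\<Sum>i=1..N. X (space \<mu>) i \<omega>) / real N) \<longlonglongrightarrow> aB (space \<mu>)"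
    using tpos gen[OF A] gen[OF sets.top] by eventually_elim auto
  then show ?thesis
  proof (rule AE_mp, intro AE_I2 impI)
    fix \<omega> assume \<omega>: "\<omega> \<in> space M"
      and h: "(\<forall>i. 1 \<le> i \<longrightarrow> 1 \<le> \<tau> i \<omega>)
      \<and> (\<lambda>N. (\<Sum>i=1..N. X A i \<omega>) / real N) \<longlonglongrightarrow> aB A
      \<and> (\<lambda>N. (\<Sum>i=1..N. X (space \<mu>) i \<omega>) / real N) \<longlonglongrightarrow> aB (space \<mu>)"
    have pos: "\<And>i. 1 \<le> i \<Longrightarrow> 1 \<le> \<tau> i \<omega>" using h by blast
    have eqs: "(\<Sum>i=1..N. X (space \<mu>) i \<omega>) = (\<Sum>i=1..N. real (\<tau> i \<omega>))" for N
      by (rule sum.cong[OF refl]) (use Xsp \<omega> in auto)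
    have limS: "(\<lambda>N. (\<Sum>i=1..N. real (\<tau> i \<omega>)) / real N) \<longlonglongrightarrow> aB (space \<mu>)"
      using h by (simp only: eqs)
    have limR: "(\<lambda>N. (\<Sum>i=1..N. real (\<tau> i \<omega>) * indicator A (\<theta> i \<omega>)) / real N) \<longlonglongrightarrow> aB A"
      using h by (simp add: X_def)
    have "(\<lambda>T. occupation (\<lambda>i. \<theta> i \<omega>) (\<lambda>i. \<tau> i \<omega>) A T) \<longlonglongrightarrow> aB A / aB (space \<mu>)"
      by (rule renewal[where ta="\<lambda>i. \<tau> i \<omega>", OF pos limS bpos limR])
    then show "(\<lambda>T. occupation (\<lambda>i. \<theta> i \<omega>) (\<lambda>i. \<tau> i \<omega>) A T)
            \<longlonglongrightarrow> set_lebesgue_integral \<mu> A (\<lambda>x. exp_tau n (g x))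
                / integral\<^sup>L \<mu> (\<lambda>x. exp_tau n (g x))"
      by (simp add: bsp aB_def)
  qed
qed

end
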